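(* Let $(\mathcal L,[\,,\,])$ be a Lie algebra over a field $\mathbf{k}$ (any dimension and characteristic) with basis $X=\{x_j\mid j\in J\}$, and let $k\in\mathbf{k}$ be nonzero. Let $((\hat A,\hat q),\hat i)$ be the free invariant algebra generated by $X$ (constructed as below), extend $\hat i$ linearly to an injective linear map $\hat i:\mathcal L\to\hat A$, write $\hat x:=\hat i(x)$, and let $R$ be the two-sided ideal of $\hat A$ generated by all elements $$\widehat{[x,y]}-\hat x\hat y+\hat y\hat x+\hat x\hat y\hat q-\hat y\hat x\hat q-k\hat x\hat q\hat y+k\hat y\hat q\hat x,\qquad x,y\in\mathcal L.$$ Let $\mathcal U:=\hat A/R$, $\bar q:=\hat q+R$, and $i:\mathcal L\to(\mathcal U,\bar q)$, $i(x):=\hat x+R$. Then $((\mathcal U,\bar q),i)$ is an enveloping$^{6\text{-th}}$ algebra of $(\mathcal L,[\,,\,])$.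
   Context: Invariant algebra: for an associative algebra $A$ (with identity) and idempotent $q$, $(A,q):=\{x\in A\mid qxq=qx\}$. Invariant homomorphism $(A,q_A)\to(B,q_B)$: linear, multiplicative, sending $1_A\mapsto1_B$ and $q_A\mapsto q_B$. On $(A,q)$, $[x,y]_{6,k}:=xy-yx-xyq+yxq+kxqy-kyqx$ is a Lie bracket; denote this Lie algebra $Lie((A,q),[\,,\,]_{6,k})$. Free invariant algebra on $X$: let $V$ have basis $X\cup\{\tilde q\}$ ($\tilde q\notin X$), $I\subseteq T(V)$ the ideal generated by $\tilde q\otimes\tilde q-\tilde q$ and $\tilde q\otimes a\otimes\tilde q-\tilde q\otimes a$ ($a\in T(V)$), $\hat A=T(V)/I$, $\hat q=\tilde q+I$, $\hat i(x_j)=x_j+I$; the images $\hat i(x_j)$ are linearly independent. An enveloping$^{6\text{-th}}$ algebra of $\mathcal L$ is a pair $((\mathcal U,\bar q),i)$ with $(\mathcal U,\bar q)$ an invariant algebra and $i:\mathcal L\to(\mathcal U,\bar q)$ such that (i) $i$ is a Lie algebra homomorphism $(\mathcal L,[\,,\,])\to Lie((\mathcal U,\bar q),[\,,\,]_{6,k})$, and (ii) for every invariant algebra $(A,q)$ and every Lie algebra homomorphism $f:\mathcal L\to Lie((A,q),[\,,\,]_{6,k})$ there is a unique invariant homomorphism $f':(\mathcal U,\bar q)\to(A,q)$ with $f=f'\circ i$. *)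

theory Defs
  imports Main "HOL.Vector_Spaces" "HOL-Algebra.QuotRing"
begin

definition lie_algebra ::
  "('k::field \<Rightarrow> 'L::ab_group_add \<Rightarrow> 'L) \<Rightarrow> ('L \<Rightarrow> 'L \<Rightarrow> 'L) \<Rightarrow> bool" where
  "lie_algebra sL br \<longleftrightarrow> Vector_Spaces.vector_space sL \<and>
     (\<forall>x y z. br (x + y) z = br x z + br y z) \<and>
     (\<forall>x y z. br x (y + z) = br x y + br x z) \<and>
     (\<forall>c x y. br (sL c x) y = sL c (br x y)) \<and>
     (\<forall>c x y. br x (sL c y) = sL c (br x y)) \<and>
     (\<forall>x. br x x = 0) \<and>
     (\<forall>x y z. br x (br y z) + br y (br z x) + br z (br x y) = 0)"

definition kalg :: "('a, 'm) ring_scheme \<Rightarrow> ('k::field \<Rightarrow> 'a \<Rightarrow> 'a) \<Rightarrow> bool" where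
  "kalg A sm \<longleftrightarrow> ring A \<and>
     (\<forall>c. \<forall>x\<in>carrier A. sm c x \<in> carrier A) \<and>
     (\<forall>c. \<forall>x\<in>carrier A. \<forall>y\<in>carrier A. sm c (x \<oplus>\<^bsub>A\<^esub> y) = sm c x \<oplus>\<^bsub>A\<^esub> sm c y) \<and>
     (\<forall>c d. \<forall>x\<in>carrier A. sm (c + d) x = sm c x \<oplus>\<^bsub>A\<^esub> sm d x) \<and>
     (\<forall>c d. \<forall>x\<in>carrier A. sm (c * d) x = sm c (sm d x)) \<and>
     (\<forall>x\<in>carrier A. sm 1 x = x) \<and>
     (\<forall>c. \<forall>x\<in>carrier A. \<forall>y\<in>carrier A.
        sm c (x \<otimes>\<^bsub>A\<^esub> y) = sm c x \<otimes>\<^bsub>A\<^esub> y \<and> sm c (x \<otimes>\<^bsub>A\<^esub> y) = x \<otimes>\<^bsub>A\<^esub> sm c y)"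

definition inv_algebra :: "('a, 'm) ring_scheme \<Rightarrow> ('k::field \<Rightarrow> 'a \<Rightarrow> 'a) \<Rightarrow> 'a \<Rightarrow> bool" where
  "inv_algebra A sm q \<longleftrightarrow> kalg A sm \<and> q \<in> carrier A \<and> q \<otimes>\<^bsub>A\<^esub> q = q"

definition inv_carrier :: "('a, 'm) ring_scheme \<Rightarrow> 'a \<Rightarrow> 'a set" where
  "inv_carrier A q = {x \<in> carrier A. q \<otimes>\<^bsub>A\<^esub> x \<otimes>\<^bsub>A\<^esub> q = q \<otimes>\<^bsub>A\<^esub> x}"

definition br6 :: "('a, 'm) ring_scheme \<Rightarrow> ('k::field \<Rightarrow> 'a \<Rightarrow> 'a) \<Rightarrow> 'a \<Rightarrow> 'k \<Rightarrow> 'a \<Rightarrow> 'a \<Rightarrow> 'a" where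
  "br6 A sm q k x y =
     x \<otimes>\<^bsub>A\<^esub> y \<ominus>\<^bsub>A\<^esub> y \<otimes>\<^bsub>A\<^esub> x
     \<ominus>\<^bsub>A\<^esub> x \<otimes>\<^bsub>A\<^esub> y \<otimes>\<^bsub>A\<^esub> q \<oplus>\<^bsub>A\<^esub> y \<otimes>\<^bsub>A\<^esub> x \<otimes>\<^bsub>A\<^esub> q
     \<oplus>\<^bsub>A\<^esub> sm k (x \<otimes>\<^bsub>A\<^esub> q \<otimes>\<^bsub>A\<^esub> y) \<ominus>\<^bsub>A\<^esub> sm k (y \<otimes>\<^bsub>A\<^esub> q \<otimes>\<^bsub>A\<^esub> x)"

definition lie_hom6 ::
  "('k::field \<Rightarrow> 'L::ab_group_add \<Rightarrow> 'L) \<Rightarrow> ('L \<Rightarrow> 'L \<Rightarrow> 'L) \<Rightarrow> 'k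
   \<Rightarrow> ('a, 'm) ring_scheme \<Rightarrow> ('k \<Rightarrow> 'a \<Rightarrow> 'a) \<Rightarrow> 'a \<Rightarrow> ('L \<Rightarrow> 'a) \<Rightarrow> bool" where
  "lie_hom6 sL br k A sm q f \<longleftrightarrow>
     (\<forall>x. f x \<in> inv_carrier A q) \<and>
     (\<forall>x y. f (x + y) = f x \<oplus>\<^bsub>A\<^esub> f y) \<and>
     (\<forall>c x. f (sL c x) = sm c (f x)) \<and>
     (\<forall>x y. f (br x y) = br6 A sm q k (f x) (f y))"

definition inv_hom ::
  "('a, 'm) ring_scheme \<Rightarrow> ('k::field \<Rightarrow> 'a \<Rightarrow> 'a) \<Rightarrow> 'a
   \<Rightarrow> ('b, 'n) ring_scheme \<Rightarrow> ('k \<Rightarrow> 'b \<Rightarrow> 'b) \<Rightarrow> 'b \<Rightarrow> ('a \<Rightarrow> 'b) \<Rightarrow> bool" where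
  "inv_hom A smA qA B smB qB \<phi> \<longleftrightarrow>
     (\<forall>x\<in>inv_carrier A qA. \<phi> x \<in> inv_carrier B qB) \<and>
     (\<forall>x\<in>inv_carrier A qA. \<forall>y\<in>inv_carrier A qA. \<phi> (x \<oplus>\<^bsub>A\<^esub> y) = \<phi> x \<oplus>\<^bsub>B\<^esub> \<phi> y) \<and>
     (\<forall>c. \<forall>x\<in>inv_carrier A qA. \<phi> (smA c x) = smB c (\<phi> x)) \<and>
     (\<forall>x\<in>inv_carrier A qA. \<forall>y\<in>inv_carrier A qA. \<phi> (x \<otimes>\<^bsub>A\<^esub> y) = \<phi> x \<otimes>\<^bsub>B\<^esub> \<phi> y) \<and>
     \<phi> \<one>\<^bsub>A\<^esub> = \<one>\<^bsub>B\<^esub> \<and> \<phi> qA = qB"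

definition quot_sm :: "('a, 'm) ring_scheme \<Rightarrow> 'a set \<Rightarrow> ('k \<Rightarrow> 'a \<Rightarrow> 'a) \<Rightarrow> 'k \<Rightarrow> 'a set \<Rightarrow> 'a set" where
  "quot_sm A I sm c X = (\<Union>x\<in>X. I +>\<^bsub>A\<^esub> sm c x)"

text \<open>Letters: Some j stands for x_j, None stands for q~. T(V) is realised as the
 finitely supported k-valued functions on words (the k-span of words), with concatenation
 product.\<close>

definition tens_alg :: "('j option list \<Rightarrow> 'k::field) ring" where
  "tens_alg = \<lparr>carrier = {f. finite {w. f w \<noteq> 0}},
     mult = (\<lambda>f g w. \<Sum>n\<le>length w. f (take n w) * g (drop n w)),
     one = (\<lambda>w. if w = [] then 1 else 0),
     zero = (\<lambda>w. 0),
     add = (\<lambda>f g w. f w + g w)\<rparr>"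

definition tens_sm :: "'k::field \<Rightarrow> ('j option list \<Rightarrow> 'k) \<Rightarrow> ('j option list \<Rightarrow> 'k)" where
  "tens_sm c f = (\<lambda>w. c * f w)"

definition tens_letter :: "'j option \<Rightarrow> ('j option list \<Rightarrow> 'k::field)" where
  "tens_letter a = (\<lambda>w. if w = [a] then 1 else 0)"

definition free_ideal :: "('j option list \<Rightarrow> 'k::field) set" where
  "free_ideal = Idl\<^bsub>tens_alg\<^esub>
     ({tens_letter None \<otimes>\<^bsub>tens_alg\<^esub> tens_letter None \<ominus>\<^bsub>tens_alg\<^esub> tens_letter None} \<union>
      {tens_letter None \<otimes>\<^bsub>tens_alg\<^esub> a \<otimes>\<^bsub>tens_alg\<^esub> tens_letter None
         \<ominus>\<^bsub>tens_alg\<^esub> tens_letter None \<otimes>\<^bsub>tens_alg\<^esub> a | a. a \<in> carrier tens_alg})"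

definition free_inv :: "('j option list \<Rightarrow> 'k::field) set ring" where
  "free_inv = tens_alg Quot free_ideal"

definition free_inv_sm :: "'k::field \<Rightarrow> ('j option list \<Rightarrow> 'k) set \<Rightarrow> ('j option list \<Rightarrow> 'k) set" where
  "free_inv_sm = quot_sm tens_alg free_ideal tens_sm"

definition free_inv_q :: "('j option list \<Rightarrow> 'k::field) set" where
  "free_inv_q = free_ideal +>\<^bsub>tens_alg\<^esub> tens_letter None"

text \<open>Linear extension of x_j |-> x_j to L -> T(V) (coordinates w.r.t. the basis b),
 followed by the projection to A^: this is the linear extension of i^.\<close>
definition hat_i :: "('k::field \<Rightarrow> 'L::ab_group_add \<Rightarrow> 'L) \<Rightarrow> ('j \<Rightarrow> 'L) \<Rightarrow> 'L
     \<Rightarrow> ('j option list \<Rightarrow> 'k) set" where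
  "hat_i sL b x = free_ideal +>\<^bsub>tens_alg\<^esub>
     (\<lambda>w. case w of [Some j] \<Rightarrow> module.representation sL (range b) x (b j) | _ \<Rightarrow> 0)"

definition rel6 :: "('k::field \<Rightarrow> 'L::ab_group_add \<Rightarrow> 'L) \<Rightarrow> ('L \<Rightarrow> 'L \<Rightarrow> 'L) \<Rightarrow> ('j \<Rightarrow> 'L) \<Rightarrow> 'k
     \<Rightarrow> 'L \<Rightarrow> 'L \<Rightarrow> ('j option list \<Rightarrow> 'k) set" where
  "rel6 sL br b k x y =
     (let A = free_inv; X = hat_i sL b x; Y = hat_i sL b y; Q = free_inv_q in
      hat_i sL b (br x y) \<ominus>\<^bsub>A\<^esub> X \<otimes>\<^bsub>A\<^esub> Y \<oplus>\<^bsub>A\<^esub> Y \<otimes>\<^bsub>A\<^esub> X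
        \<oplus>\<^bsub>A\<^esub> X \<otimes>\<^bsub>A\<^esub> Y \<otimes>\<^bsub>A\<^esub> Q \<ominus>\<^bsub>A\<^esub> Y \<otimes>\<^bsub>A\<^esub> X \<otimes>\<^bsub>A\<^esub> Q
        \<ominus>\<^bsub>A\<^esub> free_inv_sm k (X \<otimes>\<^bsub>A\<^esub> Q \<otimes>\<^bsub>A\<^esub> Y)
        \<oplus>\<^bsub>A\<^esub> free_inv_sm k (Y \<otimes>\<^bsub>A\<^esub> Q \<otimes>\<^bsub>A\<^esub> X))"

definition rel_ideal :: "('k::field \<Rightarrow> 'L::ab_group_add \<Rightarrow> 'L) \<Rightarrow> ('L \<Rightarrow> 'L \<Rightarrow> 'L) \<Rightarrow> ('j \<Rightarrow> 'L) \<Rightarrow> 'k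
     \<Rightarrow> ('j option list \<Rightarrow> 'k) set set" where
  "rel_ideal sL br b k = Idl\<^bsub>free_inv\<^esub> {rel6 sL br b k x y | x y. True}"

definition env_U :: "('k::field \<Rightarrow> 'L::ab_group_add \<Rightarrow> 'L) \<Rightarrow> ('L \<Rightarrow> 'L \<Rightarrow> 'L) \<Rightarrow> ('j \<Rightarrow> 'L) \<Rightarrow> 'k
     \<Rightarrow> ('j option list \<Rightarrow> 'k) set set ring" where
  "env_U sL br b k = free_inv Quot rel_ideal sL br b k"

definition env_sm :: "('k::field \<Rightarrow> 'L::ab_group_add \<Rightarrow> 'L) \<Rightarrow> ('L \<Rightarrow> 'L \<Rightarrow> 'L) \<Rightarrow> ('j \<Rightarrow> 'L) \<Rightarrow> 'k
     \<Rightarrow> 'k \<Rightarrow> ('j option list \<Rightarrow> 'k) set set \<Rightarrow> ('j option list \<Rightarrow> 'k) set set" where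
  "env_sm sL br b k = quot_sm free_inv (rel_ideal sL br b k) free_inv_sm"

definition env_q :: "('k::field \<Rightarrow> 'L::ab_group_add \<Rightarrow> 'L) \<Rightarrow> ('L \<Rightarrow> 'L \<Rightarrow> 'L) \<Rightarrow> ('j \<Rightarrow> 'L) \<Rightarrow> 'k
     \<Rightarrow> ('j option list \<Rightarrow> 'k) set set" where
  "env_q sL br b k = rel_ideal sL br b k +>\<^bsub>free_inv\<^esub> free_inv_q"

definition env_i :: "('k::field \<Rightarrow> 'L::ab_group_add \<Rightarrow> 'L) \<Rightarrow> ('L \<Rightarrow> 'L \<Rightarrow> 'L) \<Rightarrow> ('j \<Rightarrow> 'L) \<Rightarrow> 'k
     \<Rightarrow> 'L \<Rightarrow> ('j option list \<Rightarrow> 'k) set set" where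
  "env_i sL br b k x = rel_ideal sL br b k +>\<^bsub>free_inv\<^esub> hat_i sL b x"

end

theory Submission
  imports Defs
begin


lemma tens_mult_eq: "mult tens_alg f g w = (\<Sum>n\<le>length w. f (take n w) * g (drop n w))"
  by (simp add: tens_alg_def)

lemma tens_mult_assoc:
  fixes f g h :: "'j option list \<Rightarrow> 'k::field"
  shows "mult tens_alg (mult tens_alg f g) h = mult tens_alg f (mult tens_alg g h)"
proof
  fix w :: "'j option list"
  define L where "L = length w"
  define F where "F m r = f (take m w) * g (take r (drop m w)) * h (drop (m + r) w)" for m r
  have "mult tens_alg (mult tens_alg f g) h w = (\<Sum>n\<le>L. \<Sum>m\<le>n. F m (n - m))"
  proof -
    have "mult tens_alg (mult tens_alg f g) h w = (\<Sum>n\<le>L. (\<Sum>m\<le>n. f (take m (take n w)) * g (drop m (take n w))) * h (drop n w))"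
      by (simp add: tens_mult_eq L_def min_absorb1)
    also have "\<dots> = (\<Sum>n\<le>L. \<Sum>m\<le>n. F m (n - m))"
      by (intro sum.cong refl) (auto simp: sum_distrib_right F_def take_take drop_take min_absorb1 intro!: sum.cong)
    finally show ?thesis .
  qed
  also have "\<dots> = (\<Sum>(m,r)\<in>{(m,r). m + r \<le> L}. F m r)"
    by (rule sum.triangle_reindex_eq[symmetric])
  also have "\<dots> = (\<Sum>m\<le>L. \<Sum>r\<le>L - m. F m r)"
  proof -
    have "{(m,r). m + r \<le> L} = Sigma {..L} (\<lambda>m. {..L - m})" by auto
    then show ?thesis by (simp add: sum.Sigma)
  qed
  also have "\<dots> = mult tens_alg f (mult tens_alg g h) w"
    by (auto simp: tens_mult_eq L_def F_def sum_distrib_left mult.assoc drop_drop add.commute intro!: sum.cong)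
  finally show "mult tens_alg (mult tens_alg f g) h w = mult tens_alg f (mult tens_alg g h) w" .
qed

lemma tens_carrier: "carrier tens_alg = {f. finite {w. f w \<noteq> 0}}"
  by (simp add: tens_alg_def)

lemma tens_add: "add tens_alg f g = (\<lambda>w. f w + g w)" by (simp add: tens_alg_def)
lemma tens_zero: "zero tens_alg = (\<lambda>w. 0)" by (simp add: tens_alg_def)
lemma tens_one: "one tens_alg = (\<lambda>w. if w = [] then 1 else 0)" by (simp add: tens_alg_def)

lemma tens_mult_closed:
  fixes f g :: "'j option list \<Rightarrow> 'k::field"
  assumes "finite {w. f w \<noteq> 0}" "finite {w. g w \<noteq> 0}"
  shows "finite {w. mult tens_alg f g w \<noteq> 0}"
proof -
  have "{w. mult tens_alg f g w \<noteq> 0} \<subseteq> (\<lambda>(u,v). u @ v) ` ({w. f w \<noteq> 0} \<times> {w. g w \<noteq> 0})"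
  proof
    fix w assume "w \<in> {w. mult tens_alg f g w \<noteq> 0}"
    then have "(\<Sum>n\<le>length w. f (take n w) * g (drop n w)) \<noteq> 0" by (simp add: tens_mult_eq)
    then obtain n where "f (take n w) * g (drop n w) \<noteq> 0"
      using sum.not_neutral_contains_not_neutral by blast
    then have "f (take n w) \<noteq> 0" "g (drop n w) \<noteq> 0" by auto
    then show "w \<in> (\<lambda>(u,v). u @ v) ` ({w. f w \<noteq> 0} \<times> {w. g w \<noteq> 0})"
      by (auto intro!: image_eqI[where x="(take n w, drop n w)"])
  qed
  then show ?thesis using assms by (rule finite_subset[OF _ finite_imageI[OF finite_cartesian_product]])
qed

lemma tens_l_one:
  fixes f :: "'j option list \<Rightarrow> 'k::field"
  shows "mult tens_alg (one tens_alg) f = f"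
proof
  fix w :: "'j option list"
  have "(\<Sum>n\<le>length w. (if take n w = [] then 1 else 0) * f (drop n w)) = (\<Sum>n\<le>length w. if n = 0 then f w else 0)"
  proof (intro sum.cong refl)
    fix n assume "n \<in> {..length w}"
    then show "(if take n w = [] then 1 else 0) * f (drop n w) = (if n = 0 then f w else 0)"
      by (cases "n = 0"; cases "w = []") simp_all
  qed
  then show "mult tens_alg (one tens_alg) f w = f w"
    by (simp add: tens_mult_eq tens_one)
qed

lemma tens_r_one:
  fixes f :: "'j option list \<Rightarrow> 'k::field"
  shows "mult tens_alg f (one tens_alg) = f"
proof
  fix w :: "'j option list"
  have "(\<Sum>n\<le>length w. f (take n w) * (if drop n w = [] then 1 else 0)) = (\<Sum>n\<le>length w. if n = length w then f w else 0)"
  proof (intro sum.cong refl)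
    fix n assume "n \<in> {..length w}"
    then show "f (take n w) * (if drop n w = [] then 1 else 0) = (if n = length w then f w else 0)"
      by (cases "n = length w") simp_all
  qed
  then show "mult tens_alg f (one tens_alg) w = f w"
    by (simp add: tens_mult_eq tens_one)
qed

lemma tens_ring: "ring (tens_alg :: ('j option list \<Rightarrow> 'k::field) ring)"
proof (rule ringI)
  show "abelian_group (tens_alg :: ('j option list \<Rightarrow> 'k::field) ring)"
  proof (rule abelian_groupI)
    fix x y :: "'j option list \<Rightarrow> 'k"
    assume x: "x \<in> carrier tens_alg" and y: "y \<in> carrier tens_alg"
    have "{w. x w + y w \<noteq> 0} \<subseteq> {w. x w \<noteq> 0} \<union> {w. y w \<noteq> 0}" by auto
    then show "x \<oplus>\<^bsub>tens_alg\<^esub> y \<in> carrier tens_alg"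
      using x y by (auto simp: tens_carrier tens_add intro: finite_subset)
    show "x \<oplus>\<^bsub>tens_alg\<^esub> y = y \<oplus>\<^bsub>tens_alg\<^esub> x" by (simp add: tens_add add.commute)
  next
    show "\<zero>\<^bsub>tens_alg\<^esub> \<in> carrier (tens_alg :: ('j option list \<Rightarrow> 'k::field) ring)"
      by (simp add: tens_carrier tens_zero)
  next
    fix x y z :: "'j option list \<Rightarrow> 'k"
    show "x \<oplus>\<^bsub>tens_alg\<^esub> y \<oplus>\<^bsub>tens_alg\<^esub> z = x \<oplus>\<^bsub>tens_alg\<^esub> (y \<oplus>\<^bsub>tens_alg\<^esub> z)"
      by (simp add: tens_add add.assoc)
  next
    fix x :: "'j option list \<Rightarrow> 'k"
    show "\<zero>\<^bsub>tens_alg\<^esub> \<oplus>\<^bsub>tens_alg\<^esub> x = x" by (simp add: tens_add tens_zero)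
  next
    fix x :: "'j option list \<Rightarrow> 'k"
    assume x: "x \<in> carrier tens_alg"
    show "\<exists>y\<in>carrier tens_alg. y \<oplus>\<^bsub>tens_alg\<^esub> x = \<zero>\<^bsub>tens_alg\<^esub>"
      using x by (intro bexI[where x="\<lambda>w. - x w"]) (auto simp: tens_carrier tens_add tens_zero)
  qed
next
  show "monoid (tens_alg :: ('j option list \<Rightarrow> 'k::field) ring)"
    by (rule monoidI) (auto simp: tens_mult_closed tens_carrier tens_mult_assoc tens_l_one tens_r_one,
        simp add: tens_one)
next
  fix x y z :: "'j option list \<Rightarrow> 'k"
  show "(x \<oplus>\<^bsub>tens_alg\<^esub> y) \<otimes>\<^bsub>tens_alg\<^esub> z = x \<otimes>\<^bsub>tens_alg\<^esub> z \<oplus>\<^bsub>tens_alg\<^esub> y \<otimes>\<^bsub>tens_alg\<^esub> z"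
    by (simp add: tens_mult_eq[abs_def] tens_add distrib_right sum.distrib)
  show "z \<otimes>\<^bsub>tens_alg\<^esub> (x \<oplus>\<^bsub>tens_alg\<^esub> y) = z \<otimes>\<^bsub>tens_alg\<^esub> x \<oplus>\<^bsub>tens_alg\<^esub> z \<otimes>\<^bsub>tens_alg\<^esub> y"
    by (simp add: tens_mult_eq[abs_def] tens_add distrib_left sum.distrib)
qed

lemma tens_kalg: "kalg (tens_alg :: ('j option list \<Rightarrow> 'k::field) ring) tens_sm"
  unfolding kalg_def
proof (intro conjI allI ballI)
  show "ring (tens_alg :: ('j option list \<Rightarrow> 'k::field) ring)" by (rule tens_ring)
next
  fix c :: 'k and x :: "'j option list \<Rightarrow> 'k" assume "x \<in> carrier tens_alg"
  then show "tens_sm c x \<in> carrier tens_alg"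
    by (auto simp: tens_carrier tens_sm_def intro: finite_subset[rotated])
qed (auto simp: tens_sm_def tens_add tens_mult_eq distrib_left sum_distrib_left algebra_simps)



lemma kalg_ring: "kalg A sm \<Longrightarrow> ring A" unfolding kalg_def by simp
lemma kalg_closed: "kalg A sm \<Longrightarrow> x \<in> carrier A \<Longrightarrow> sm c x \<in> carrier A" unfolding kalg_def by simp
lemma kalg_add: "kalg A sm \<Longrightarrow> x \<in> carrier A \<Longrightarrow> y \<in> carrier A \<Longrightarrow> sm c (x \<oplus>\<^bsub>A\<^esub> y) = sm c x \<oplus>\<^bsub>A\<^esub> sm c y"
  unfolding kalg_def by simp
lemma kalg_sadd: "kalg A sm \<Longrightarrow> x \<in> carrier A \<Longrightarrow> sm (c + d) x = sm c x \<oplus>\<^bsub>A\<^esub> sm d x"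
  unfolding kalg_def by simp
lemma kalg_smult: "kalg A sm \<Longrightarrow> x \<in> carrier A \<Longrightarrow> sm (c * d) x = sm c (sm d x)"
  unfolding kalg_def by simp
lemma kalg_one: "kalg A sm \<Longrightarrow> x \<in> carrier A \<Longrightarrow> sm 1 x = x"
  unfolding kalg_def by simp
lemma kalg_ml: "kalg A sm \<Longrightarrow> x \<in> carrier A \<Longrightarrow> y \<in> carrier A \<Longrightarrow> sm c (x \<otimes>\<^bsub>A\<^esub> y) = sm c x \<otimes>\<^bsub>A\<^esub> y"
  unfolding kalg_def by (elim conjE) (drule spec[of _ c], drule bspec[of _ _ x], assumption, drule bspec[of _ _ y], assumption, erule conjunct1)
lemma kalg_mr: "kalg A sm \<Longrightarrow> x \<in> carrier A \<Longrightarrow> y \<in> carrier A \<Longrightarrow> sm c (x \<otimes>\<^bsub>A\<^esub> y) = x \<otimes>\<^bsub>A\<^esub> sm c y"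
  unfolding kalg_def by (elim conjE) (drule spec[of _ c], drule bspec[of _ _ x], assumption, drule bspec[of _ _ y], assumption, erule conjunct2)


lemma (in ideal) rcos_mem_iff:
  assumes "x \<in> carrier R" "y \<in> carrier R"
  shows "x \<in> I +> y \<longleftrightarrow> x \<ominus> y \<in> I"
proof
  assume "x \<in> I +> y"
  then obtain h where h: "h \<in> I" "x = h \<oplus> y" by (auto simp: a_r_coset_def')
  then have "x \<ominus> y = h" using assms a_Hcarr[OF h(1)] by algebra
  then show "x \<ominus> y \<in> I" using h by simp
next
  assume "x \<ominus> y \<in> I"
  moreover have "x = (x \<ominus> y) \<oplus> y" using assms by algebra
  ultimately show "x \<in> I +> y" by (auto simp: a_r_coset_def')
qed

lemma (in ideal) rcos_eq_iff:
  assumes "x \<in> carrier R" "y \<in> carrier R"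
  shows "I +> x = I +> y \<longleftrightarrow> x \<ominus> y \<in> I"
proof
  assume "I +> x = I +> y"
  moreover have "x \<in> I +> x" using assms a_rcos_self by auto
  ultimately show "x \<ominus> y \<in> I" using rcos_mem_iff assms by auto
next
  assume "x \<ominus> y \<in> I"
  then have "x \<in> I +> y" using rcos_mem_iff assms by auto
  then show "I +> x = I +> y"
    using a_repr_independence[of x I y] assms a_subgroup by (simp add: additive_subgroup.a_subgroup) 
qed


lemma kalg_sm_ideal:
  assumes "kalg A sm" "ideal I A" "i \<in> I"
  shows "sm c i \<in> I"
proof -
  interpret ideal I A by fact
  have ic: "i \<in> carrier A" using assms(3) a_Hcarr by blast
  have "sm c i = sm c (\<one>\<^bsub>A\<^esub> \<otimes>\<^bsub>A\<^esub> i)" using ic by simp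
  also have "\<dots> = sm c \<one>\<^bsub>A\<^esub> \<otimes>\<^bsub>A\<^esub> i" using kalg_ml[OF assms(1) one_closed ic] .
  also have "\<dots> \<in> I" using assms(3) kalg_closed[OF assms(1) one_closed] by (intro I_l_closed)
  finally show ?thesis .
qed

lemma quot_sm_rcos:
  assumes "kalg A sm" "ideal I A" "a \<in> carrier A"
  shows "quot_sm A I sm c (I +>\<^bsub>A\<^esub> a) = I +>\<^bsub>A\<^esub> sm c a"
proof -
  interpret ideal I A by fact
  have smc: "\<And>x. x \<in> carrier A \<Longrightarrow> sm c x \<in> carrier A" using kalg_closed[OF assms(1)] .
  have eq: "I +>\<^bsub>A\<^esub> sm c x = I +>\<^bsub>A\<^esub> sm c a" if "x \<in> I +>\<^bsub>A\<^esub> a" for x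
  proof -
    have "x \<in> (\<Union>h\<in>I. {h \<oplus>\<^bsub>A\<^esub> a})" using that by (simp only: a_r_coset_def')
    then obtain h where h: "h \<in> I" "x = h \<oplus>\<^bsub>A\<^esub> a" by blast
    have hc: "h \<in> carrier A" by (rule a_Hcarr[OF h(1)])
    have sx: "sm c x = sm c h \<oplus>\<^bsub>A\<^esub> sm c a" unfolding h(2) using hc assms(3) by (rule kalg_add[OF assms(1)])
    have shI: "sm c h \<in> I" using kalg_sm_ideal[OF assms(1,2) h(1)] .
    have "sm c x \<ominus>\<^bsub>A\<^esub> sm c a = sm c h" unfolding sx using smc[OF hc] smc[OF assms(3)] by algebra
    then have "sm c x \<ominus>\<^bsub>A\<^esub> sm c a \<in> I" using shI by simp
    moreover have "sm c x \<in> carrier A" unfolding sx using smc[OF hc] smc[OF assms(3)] by simp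
    ultimately show ?thesis using rcos_eq_iff smc[OF assms(3)] by blast
  qed
  have aa: "a \<in> I +>\<^bsub>A\<^esub> a" by (rule a_rcos_self[OF assms(3)])
  show ?thesis unfolding quot_sm_def
  proof (rule antisym)
    show "(\<Union>x\<in>I +>\<^bsub>A\<^esub> a. I +>\<^bsub>A\<^esub> sm c x) \<subseteq> I +>\<^bsub>A\<^esub> sm c a" using eq by blast
    show "I +>\<^bsub>A\<^esub> sm c a \<subseteq> (\<Union>x\<in>I +>\<^bsub>A\<^esub> a. I +>\<^bsub>A\<^esub> sm c x)" using aa by blast
  qed
qed

lemma quot_carrier: "carrier (A Quot I) = {I +>\<^bsub>A\<^esub> a | a. a \<in> carrier A}"
proof -
  have "carrier (A Quot I) = a_rcosets\<^bsub>A\<^esub> I" by (simp add: FactRing_def)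
  also have "\<dots> = (\<Union>a\<in>carrier A. {I +>\<^bsub>A\<^esub> a})" by (simp only: A_RCOSETS_def')
  finally show ?thesis by blast
qed

lemma quot_carrierE:
  assumes "X \<in> carrier (A Quot I)"
  obtains x where "x \<in> carrier A" "X = I +>\<^bsub>A\<^esub> x"
  using assms unfolding quot_carrier by blast

lemma quot_carrierI: "x \<in> carrier A \<Longrightarrow> I +>\<^bsub>A\<^esub> x \<in> carrier (A Quot I)"
  unfolding quot_carrier by blast

lemma quot_kalg:
  assumes "kalg A sm" "ideal I A"
  shows "kalg (A Quot I) (quot_sm A I sm)"
proof -
  interpret ideal I A by fact
  interpret h: ring_hom_ring A "A Quot I" "(+>\<^bsub>A\<^esub>) I" by (rule rcos_ring_hom_ring)
  note K = kalg_closed[OF assms(1)] kalg_add[OF assms(1)] kalg_sadd[OF assms(1)] kalg_smult[OF assms(1)]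
      kalg_one[OF assms(1)] kalg_ml[OF assms(1)] kalg_mr[OF assms(1)]
  note Q = quot_sm_rcos[OF assms]
  show ?thesis unfolding kalg_def
  proof (intro conjI allI ballI)
    show "ring (A Quot I)" by (rule quotient_is_ring)
  next
    fix c X assume "X \<in> carrier (A Quot I)"
    then obtain x where x: "x \<in> carrier A" "X = I +>\<^bsub>A\<^esub> x" by (rule quot_carrierE)
    show "quot_sm A I sm c X \<in> carrier (A Quot I)" unfolding x(2) Q[OF x(1)] by (rule quot_carrierI[OF K(1)[OF x(1)]])
  next
    fix c X Y assume "X \<in> carrier (A Quot I)" "Y \<in> carrier (A Quot I)"
    then obtain x y where x: "x \<in> carrier A" "X = I +>\<^bsub>A\<^esub> x" and y: "y \<in> carrier A" "Y = I +>\<^bsub>A\<^esub> y"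
      by (meson quot_carrierE)
    show "quot_sm A I sm c (X \<oplus>\<^bsub>A Quot I\<^esub> Y) = quot_sm A I sm c X \<oplus>\<^bsub>A Quot I\<^esub> quot_sm A I sm c Y"
      unfolding x(2) y(2) h.hom_add[OF x(1) y(1), symmetric] Q[OF x(1)] Q[OF y(1)] Q[OF add.m_closed[OF x(1) y(1)]]
        h.hom_add[OF K(1)[OF x(1)] K(1)[OF y(1)], symmetric] K(2)[OF x(1) y(1)] ..
    have xy: "X \<otimes>\<^bsub>A Quot I\<^esub> Y = I +>\<^bsub>A\<^esub> (x \<otimes>\<^bsub>A\<^esub> y)"
      unfolding x(2) y(2) by (rule h.hom_mult[OF x(1) y(1), symmetric])
    have e1: "quot_sm A I sm c X \<otimes>\<^bsub>A Quot I\<^esub> Y = I +>\<^bsub>A\<^esub> (sm c x \<otimes>\<^bsub>A\<^esub> y)"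
      unfolding x(2) y(2) Q[OF x(1)] by (rule h.hom_mult[OF K(1)[OF x(1)] y(1), symmetric])
    have e2: "X \<otimes>\<^bsub>A Quot I\<^esub> quot_sm A I sm c Y = I +>\<^bsub>A\<^esub> (x \<otimes>\<^bsub>A\<^esub> sm c y)"
      unfolding x(2) y(2) Q[OF y(1)] by (rule h.hom_mult[OF x(1) K(1)[OF y(1)], symmetric])
    have e3: "quot_sm A I sm c (X \<otimes>\<^bsub>A Quot I\<^esub> Y) = I +>\<^bsub>A\<^esub> sm c (x \<otimes>\<^bsub>A\<^esub> y)"
      unfolding xy by (rule Q[OF m_closed[OF x(1) y(1)]])
    show "quot_sm A I sm c (X \<otimes>\<^bsub>A Quot I\<^esub> Y) = quot_sm A I sm c X \<otimes>\<^bsub>A Quot I\<^esub> Y"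
      unfolding e1 e3 K(6)[OF x(1) y(1)] ..
    show "quot_sm A I sm c (X \<otimes>\<^bsub>A Quot I\<^esub> Y) = X \<otimes>\<^bsub>A Quot I\<^esub> quot_sm A I sm c Y"
      unfolding e2 e3 K(7)[OF x(1) y(1)] ..
  next
    fix c d X assume "X \<in> carrier (A Quot I)"
    then obtain x where x: "x \<in> carrier A" "X = I +>\<^bsub>A\<^esub> x" by (rule quot_carrierE)
    show "quot_sm A I sm (c + d) X = quot_sm A I sm c X \<oplus>\<^bsub>A Quot I\<^esub> quot_sm A I sm d X"
      unfolding x(2) Q[OF x(1)] h.hom_add[OF K(1)[OF x(1)] K(1)[OF x(1)], symmetric] K(3)[OF x(1)] ..
    show "quot_sm A I sm (c * d) X = quot_sm A I sm c (quot_sm A I sm d X)"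
      unfolding x(2) Q[OF x(1)] Q[OF K(1)[OF x(1)]] K(4)[OF x(1)] ..
  next
    fix X assume "X \<in> carrier (A Quot I)"
    then obtain x where x: "x \<in> carrier A" "X = I +>\<^bsub>A\<^esub> x" by (rule quot_carrierE)
    show "quot_sm A I sm 1 X = X" unfolding x(2) Q[OF x(1)] K(5)[OF x(1)] ..
  qed
qed



definition wordA :: "('b, 'm) ring_scheme \<Rightarrow> ('a \<Rightarrow> 'b) \<Rightarrow> 'a list \<Rightarrow> 'b" where
  "wordA A g w = foldr (\<lambda>a r. g a \<otimes>\<^bsub>A\<^esub> r) w \<one>\<^bsub>A\<^esub>"

definition phi :: "('b, 'm) ring_scheme \<Rightarrow> ('k::field \<Rightarrow> 'b \<Rightarrow> 'b) \<Rightarrow> ('a \<Rightarrow> 'b) \<Rightarrow> ('a list \<Rightarrow> 'k) \<Rightarrow> 'b" where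
  "phi A sm g F = finsum A (\<lambda>w. sm (F w) (wordA A g w)) {w. F w \<noteq> 0}"

definition delta :: "'a list \<Rightarrow> 'a list \<Rightarrow> 'k::field" where
  "delta u = (\<lambda>w. if w = u then 1 else 0)"

locale phictx =
  fixes A :: "('b, 'm) ring_scheme" (structure) and sm :: "'k::field \<Rightarrow> 'b \<Rightarrow> 'b" and g :: "'a option \<Rightarrow> 'b"
  assumes kalgA: "kalg A sm" and g_closed: "\<And>a. g a \<in> carrier A"
begin

sublocale ring A by (rule kalg_ring[OF kalgA])

lemmas K = kalg_closed[OF kalgA] kalg_add[OF kalgA] kalg_sadd[OF kalgA] kalg_smult[OF kalgA]
      kalg_one[OF kalgA] kalg_ml[OF kalgA] kalg_mr[OF kalgA]

lemma sm_closed[simp]: "x \<in> carrier A \<Longrightarrow> sm c x \<in> carrier A" by (rule K(1))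

lemma word_closed[simp]: "wordA A g w \<in> carrier A"
  by (induction w) (simp_all add: wordA_def g_closed)

lemma word_Cons: "wordA A g (a # w) = g a \<otimes> wordA A g w" by (simp add: wordA_def)
lemma word_Nil: "wordA A g [] = \<one>" by (simp add: wordA_def)

lemma word_append: "wordA A g (u @ v) = wordA A g u \<otimes> wordA A g v"
  by (induction u) (simp_all add: word_Cons word_Nil m_assoc g_closed)

lemma sm_zero[simp]: "sm c \<zero> = \<zero>"
proof -
  have "sm c \<zero> = sm c (\<zero> \<oplus> \<zero>)" by simp
  also have "\<dots> = sm c \<zero> \<oplus> sm c \<zero>" by (rule K(2)) simp_all
  finally have e: "sm c \<zero> = sm c \<zero> \<oplus> sm c \<zero>" .
  have "\<zero> = sm c \<zero> \<ominus> sm c \<zero>" by (simp add: r_neg a_minus_def)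
  also have "\<dots> = (sm c \<zero> \<oplus> sm c \<zero>) \<ominus> sm c \<zero>" using e by simp
  also have "\<dots> = sm c \<zero>" by (simp add: a_minus_def a_assoc r_neg)
  finally show ?thesis by simp
qed

lemma sm_zero_scalar[simp]: "x \<in> carrier A \<Longrightarrow> sm 0 x = \<zero>"
proof -
  assume x: "x \<in> carrier A"
  have e: "sm 0 x = sm 0 x \<oplus> sm 0 x" using K(3)[OF x, of 0 0] by simp
  have "\<zero> = sm 0 x \<ominus> sm 0 x" using x by (simp add: r_neg a_minus_def)
  also have "\<dots> = (sm 0 x \<oplus> sm 0 x) \<ominus> sm 0 x" using e by simp
  also have "\<dots> = sm 0 x" using x by (simp add: a_minus_def a_assoc r_neg)
  finally show ?thesis by simp
qed

lemma sm_finsum: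
  assumes "finite S" "\<And>i. i \<in> S \<Longrightarrow> f i \<in> carrier A"
  shows "sm c (finsum A f S) = finsum A (\<lambda>i. sm c (f i)) S"
  using assms
proof (induction S rule: finite_induct)
  case empty then show ?case by simp
next
  case (insert x F)
  have fF: "f \<in> F \<rightarrow> carrier A" using insert by auto
  have fF': "(\<lambda>i. sm c (f i)) \<in> F \<rightarrow> carrier A" using insert by auto
  have "sm c (finsum A f (insert x F)) = sm c (f x \<oplus> finsum A f F)"
    using insert fF by (simp add: finsum_insert)
  also have "\<dots> = sm c (f x) \<oplus> sm c (finsum A f F)" using insert fF by (intro K(2)) (auto intro: finsum_closed)
  also have "\<dots> = finsum A (\<lambda>i. sm c (f i)) (insert x F)"
    using insert fF' by (simp add: finsum_insert)
  finally show ?case .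
qed

lemma sm_sum_scalar:
  assumes "finite S" "x \<in> carrier A"
  shows "sm (\<Sum>i\<in>S. c i) x = finsum A (\<lambda>i. sm (c i) x) S"
  using assms(1)
proof (induction S rule: finite_induct)
  case empty then show ?case using assms(2) by simp
next
  case (insert y F)
  have "(\<lambda>i. sm (c i) x) \<in> F \<rightarrow> carrier A" using assms(2) by auto
  then show ?case using insert assms(2) by (simp add: finsum_insert K(3))
qed

lemma phi_eq:
  assumes "finite S" "{w. F w \<noteq> 0} \<subseteq> S"
  shows "phi A sm g F = finsum A (\<lambda>w. sm (F w) (wordA A g w)) S"
  unfolding phi_def
  by (rule add.finprod_mono_neutral_cong_left) (use assms in auto)

lemma phi_closed: "phi A sm g F \<in> carrier A"
  unfolding phi_def by (rule finsum_closed) auto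

lemma phi_add:
  assumes "finite {w. F w \<noteq> 0}" "finite {w. G w \<noteq> 0}"
  shows "phi A sm g (\<lambda>w. F w + G w) = phi A sm g F \<oplus> phi A sm g G"
proof -
  let ?S = "{w. F w \<noteq> 0} \<union> {w. G w \<noteq> 0}"
  have fin: "finite ?S" using assms by simp
  have "phi A sm g (\<lambda>w. F w + G w) = finsum A (\<lambda>w. sm (F w + G w) (wordA A g w)) ?S"
    by (rule phi_eq[OF fin]) auto
  also have "\<dots> = finsum A (\<lambda>w. sm (F w) (wordA A g w) \<oplus> sm (G w) (wordA A g w)) ?S"
    by (rule finsum_cong') (auto simp: K(3))
  also have "\<dots> = finsum A (\<lambda>w. sm (F w) (wordA A g w)) ?S \<oplus> finsum A (\<lambda>w. sm (G w) (wordA A g w)) ?S"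
    by (rule finsum_addf) auto
  also have "\<dots> = phi A sm g F \<oplus> phi A sm g G"
    using phi_eq[OF fin, of F] phi_eq[OF fin, of G] by auto
  finally show ?thesis .
qed

lemma phi_scale:
  assumes "finite {w. F w \<noteq> 0}"
  shows "phi A sm g (\<lambda>w. c * F w) = sm c (phi A sm g F)"
proof -
  let ?S = "{w. F w \<noteq> 0}"
  have "phi A sm g (\<lambda>w. c * F w) = finsum A (\<lambda>w. sm (c * F w) (wordA A g w)) ?S"
    by (rule phi_eq[OF assms]) auto
  also have "\<dots> = finsum A (\<lambda>w. sm c (sm (F w) (wordA A g w))) ?S"
    by (rule finsum_cong') (auto simp: K(4))
  also have "\<dots> = sm c (phi A sm g F)"
    unfolding phi_def by (rule sm_finsum[symmetric]) (use assms in auto)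
  finally show ?thesis .
qed

lemma phi_delta: "phi A sm g (delta u) = wordA A g u"
proof -
  have "phi A sm g (delta u) = finsum A (\<lambda>w. sm (delta u w) (wordA A g w)) {u}"
    by (rule phi_eq) (auto simp: delta_def)
  also have "\<dots> = wordA A g u" by (simp add: delta_def K(5))
  finally show ?thesis .
qed

lemma phi_sum:
  assumes "finite I" "\<And>i. i \<in> I \<Longrightarrow> finite {w. F i w \<noteq> 0}"
  shows "phi A sm g (\<lambda>w. \<Sum>i\<in>I. F i w) = finsum A (\<lambda>i. phi A sm g (F i)) I"
  using assms
proof (induction I rule: finite_induct)
  case empty
  then show ?case by (simp add: phi_def)
next
  case (insert x I)
  have fin: "finite {w. (\<Sum>i\<in>I. F i w) \<noteq> 0}"
  proof (rule finite_subset)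
    show "{w. (\<Sum>i\<in>I. F i w) \<noteq> 0} \<subseteq> (\<Union>i\<in>I. {w. F i w \<noteq> 0})"
      by (auto dest: sum.not_neutral_contains_not_neutral)
    show "finite (\<Union>i\<in>I. {w. F i w \<noteq> 0})" using insert by auto
  qed
  have "phi A sm g (\<lambda>w. \<Sum>i\<in>insert x I. F i w) = phi A sm g (\<lambda>w. F x w + (\<Sum>i\<in>I. F i w))"
    using insert by simp
  also have "\<dots> = phi A sm g (F x) \<oplus> phi A sm g (\<lambda>w. \<Sum>i\<in>I. F i w)"
    by (rule phi_add) (use insert fin in auto)
  also have "\<dots> = finsum A (\<lambda>i. phi A sm g (F i)) (insert x I)"
    using insert by (simp add: finsum_insert phi_closed Pi_def)
  finally show ?case .
qed

end



lemma delta_mult: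
  "mult tens_alg (delta u) (delta v) = (delta (u @ v) :: 'a option list \<Rightarrow> 'k::field)"
proof
  fix w :: "'a option list"
  have "(\<Sum>n\<le>length w. (delta u (take n w) :: 'k) * delta v (drop n w)) =
        (\<Sum>n\<le>length w. if n = length u \<and> w = u @ v then 1 else 0)"
  proof (intro sum.cong refl)
    fix n assume n: "n \<in> {..length w}"
    show "(delta u (take n w) :: 'k) * delta v (drop n w) = (if n = length u \<and> w = u @ v then 1 else 0)"
    proof (cases "take n w = u \<and> drop n w = v")
      case True
      then have "w = u @ v" by (metis append_take_drop_id)
      moreover have "n = length u" using True n by auto
      ultimately show ?thesis using True by (simp add: delta_def)
    next
      case False
      then have "\<not> (n = length u \<and> w = u @ v)" by auto
      then show ?thesis using False by (auto simp: delta_def)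
    qed
  qed
  also have "\<dots> = delta (u @ v) w"
    by (auto simp: delta_def)
  finally show "mult tens_alg (delta u) (delta v) w = (delta (u @ v) w :: 'k)"
    by (simp only: tens_mult_eq)
qed

lemma expand_fun:
  fixes F :: "'a option list \<Rightarrow> 'k::field"
  assumes "finite S" "{w. F w \<noteq> 0} \<subseteq> S"
  shows "F = (\<lambda>w. \<Sum>u\<in>S. F u * delta u w)"
proof
  fix w
  show "F w = (\<Sum>u\<in>S. F u * delta u w)"
  proof (cases "w \<in> S")
    case True
    then show ?thesis using assms(1) by (simp add: delta_def if_distrib sum.delta' cong: if_cong)
  next
    case False
    have "\<forall>u\<in>S. F u * delta u w = 0" using False by (auto simp: delta_def)
    moreover have "F w = 0" using assms(2) False by auto
    ultimately show ?thesis using sum.neutral[of S "\<lambda>u. F u * delta u w"] by simp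
  qed
qed

lemma mult_expand:
  fixes F G :: "'a option list \<Rightarrow> 'k::field"
  assumes "finite S" "{w. F w \<noteq> 0} \<subseteq> S" "finite T" "{w. G w \<noteq> 0} \<subseteq> T"
  shows "mult tens_alg F G = (\<lambda>w. \<Sum>u\<in>S. \<Sum>v\<in>T. (F u * G v) * delta (u @ v) w)"
proof
  fix w
  have "mult tens_alg F G w = (\<Sum>n\<le>length w. (\<Sum>u\<in>S. F u * delta u (take n w)) * (\<Sum>v\<in>T. G v * delta v (drop n w)))"
    by (subst expand_fun[OF assms(1,2)], subst expand_fun[OF assms(3,4)]) (simp add: tens_mult_eq)
  also have "\<dots> = (\<Sum>n\<le>length w. \<Sum>u\<in>S. \<Sum>v\<in>T. (F u * G v) * (delta u (take n w) * delta v (drop n w)))"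
    by (simp add: sum_product mult_ac)
  also have "\<dots> = (\<Sum>u\<in>S. \<Sum>v\<in>T. (F u * G v) * (\<Sum>n\<le>length w. delta u (take n w) * delta v (drop n w)))"
    by (simp add: sum_distrib_left sum.swap[of _ "{..length w}"])
  also have "\<dots> = (\<Sum>u\<in>S. \<Sum>v\<in>T. (F u * G v) * delta (u @ v) w)"
    using delta_mult[of u v] by (simp add: delta_mult[symmetric] tens_mult_eq)
  finally show "mult tens_alg F G w = (\<Sum>u\<in>S. \<Sum>v\<in>T. (F u * G v) * delta (u @ v) w)" .
qed

context phictx begin

lemma phi_mult:
  fixes F G :: "'a option list \<Rightarrow> 'k"
  assumes F: "finite {w. F w \<noteq> 0}" and G: "finite {w. G w \<noteq> 0}"
  shows "phi A sm g (mult tens_alg F G) = phi A sm g F \<otimes> phi A sm g G"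
proof -
  let ?S = "{w. F w \<noteq> 0}" and ?T = "{w. G w \<noteq> 0}"
  let ?a = "\<lambda>u. sm (F u) (wordA A g u)" and ?b = "\<lambda>v. sm (G v) (wordA A g v)"
  have fd: "finite {w. c * delta u w \<noteq> (0::'k)}" for c u
    by (rule finite_subset[of _ "{u}"]) (auto simp: delta_def)
  have fd2: "finite {w. (\<Sum>v\<in>?T. c v * delta (u @ v) w) \<noteq> (0::'k)}" for c u
  proof (rule finite_subset)
    show "{w. (\<Sum>v\<in>?T. c v * delta (u @ v) w) \<noteq> (0::'k)} \<subseteq> (\<lambda>v. u @ v) ` ?T"
    proof
      fix w assume "w \<in> {w. (\<Sum>v\<in>?T. c v * delta (u @ v) w) \<noteq> (0::'k)}"
      then obtain v where "v \<in> ?T" "c v * delta (u @ v) w \<noteq> 0"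
        using sum.not_neutral_contains_not_neutral by force
      then show "w \<in> (\<lambda>v. u @ v) ` ?T" by (auto simp: delta_def split: if_splits)
    qed
  qed (use G in auto)
  have "phi A sm g (mult tens_alg F G) = phi A sm g (\<lambda>w. \<Sum>u\<in>?S. \<Sum>v\<in>?T. (F u * G v) * delta (u @ v) w)"
    by (subst mult_expand[OF F _ G]) auto
  also have "\<dots> = finsum A (\<lambda>u. phi A sm g (\<lambda>w. \<Sum>v\<in>?T. (F u * G v) * delta (u @ v) w)) ?S"
    by (rule phi_sum[OF F fd2])
  also have "\<dots> = finsum A (\<lambda>u. finsum A (\<lambda>v. phi A sm g (\<lambda>w. (F u * G v) * delta (u @ v) w)) ?T) ?S"
    by (rule finsum_cong') (auto intro!: phi_sum[OF G fd] simp: Pi_def phi_closed)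
  also have "\<dots> = finsum A (\<lambda>u. finsum A (\<lambda>v. ?a u \<otimes> ?b v) ?T) ?S"
  proof (rule finsum_cong'[OF refl])
    show "(\<lambda>u. finsum A (\<lambda>v. ?a u \<otimes> ?b v) ?T) \<in> ?S \<rightarrow> carrier A" by (auto intro: finsum_closed)
    fix u
    show "finsum A (\<lambda>v. phi A sm g (\<lambda>w. (F u * G v) * delta (u @ v) w)) ?T = finsum A (\<lambda>v. ?a u \<otimes> ?b v) ?T"
    proof (rule finsum_cong'[OF refl])
      show "(\<lambda>v. ?a u \<otimes> ?b v) \<in> ?T \<rightarrow> carrier A" by auto
      fix v
      have "phi A sm g (\<lambda>w. (F u * G v) * delta (u @ v) w) = sm (F u * G v) (wordA A g (u @ v))"
        using phi_scale[of "delta (u @ v)" "F u * G v"] fd[of 1 "u @ v"] by (simp add: phi_delta)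
      also have "\<dots> = sm (F u) (sm (G v) (wordA A g u \<otimes> wordA A g v))"
        by (simp add: word_append K(4))
      also have "\<dots> = sm (F u) (wordA A g u \<otimes> sm (G v) (wordA A g v))"
        by (simp add: K(7))
      also have "\<dots> = ?a u \<otimes> ?b v"
        by (simp add: K(6))
      finally show "phi A sm g (\<lambda>w. (F u * G v) * delta (u @ v) w) = ?a u \<otimes> ?b v" .
    qed
  qed
  also have "\<dots> = finsum A (\<lambda>u. ?a u \<otimes> finsum A ?b ?T) ?S"
    by (rule finsum_cong'[OF refl]) (auto intro: finsum_closed simp: finsum_rdistr[OF G])
  also have "\<dots> = finsum A ?a ?S \<otimes> finsum A ?b ?T"
    by (rule finsum_ldistr[OF F, symmetric]) (auto intro: finsum_closed)
  also have "\<dots> = phi A sm g F \<otimes> phi A sm g G" by (simp add: phi_def)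
  finally show ?thesis .
qed

lemma phi_hom: "phi A sm g \<in> ring_hom tens_alg A"
proof (rule ring_hom_memI)
  fix x y :: "'a option list \<Rightarrow> 'k"
  assume x: "x \<in> carrier tens_alg" and y: "y \<in> carrier tens_alg"
  show "phi A sm g x \<in> carrier A" by (rule phi_closed)
  show "phi A sm g (x \<otimes>\<^bsub>tens_alg\<^esub> y) = phi A sm g x \<otimes> phi A sm g y"
    using x y by (intro phi_mult) (auto simp: tens_carrier)
  show "phi A sm g (x \<oplus>\<^bsub>tens_alg\<^esub> y) = phi A sm g x \<oplus> phi A sm g y"
    using x y by (simp add: tens_add tens_carrier phi_add)
next
  have "one tens_alg = (delta [] :: 'a option list \<Rightarrow> 'k)" by (simp add: tens_one delta_def)
  then show "phi A sm g \<one>\<^bsub>tens_alg\<^esub> = \<one>" by (simp add: phi_delta word_Nil)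
qed

end



lemma descend_eq:
  assumes h: "ring_hom_ring R S h" and I: "ideal I R" and z: "\<forall>i\<in>I. h i = \<zero>\<^bsub>S\<^esub>"
    and x: "x \<in> carrier R"
  shows "the_elem (h ` (I +>\<^bsub>R\<^esub> x)) = h x"
proof -
  interpret h: ring_hom_ring R S h by fact
  interpret ideal I R by fact
  have "h ` (I +>\<^bsub>R\<^esub> x) = {h x}"
  proof
    show "h ` (I +>\<^bsub>R\<^esub> x) \<subseteq> {h x}"
    proof
      fix y assume "y \<in> h ` (I +>\<^bsub>R\<^esub> x)"
      then obtain z where zz: "z \<in> I +>\<^bsub>R\<^esub> x" "y = h z" by blast
      have "z \<in> (\<Union>i\<in>I. {i \<oplus>\<^bsub>R\<^esub> x})" using zz(1) by (simp only: a_r_coset_def')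
      then obtain i where i: "i \<in> I" "z = i \<oplus>\<^bsub>R\<^esub> x" by blast
      have ic: "i \<in> carrier R" by (rule a_Hcarr[OF i(1)])
      have "h z = h i \<oplus>\<^bsub>S\<^esub> h x" unfolding i(2) using ic x by simp
      also have "\<dots> = h x" using z i(1) x by simp
      finally show "y \<in> {h x}" using zz by simp
    qed
    show "{h x} \<subseteq> h ` (I +>\<^bsub>R\<^esub> x)" using a_rcos_self[OF x] by blast
  qed
  then show ?thesis by simp
qed

lemma descend_hom:
  assumes hh: "ring_hom_ring R S h" and II: "ideal I R" and zz: "\<forall>i\<in>I. h i = \<zero>\<^bsub>S\<^esub>"
  shows "(\<lambda>X. the_elem (h ` X)) \<in> ring_hom (R Quot I) S"
proof -
  note D = descend_eq[OF hh II zz]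
  interpret h: ring_hom_ring R S h by fact
  interpret ideal I R by fact
  interpret p: ring_hom_ring R "R Quot I" "(+>\<^bsub>R\<^esub>) I" by (rule rcos_ring_hom_ring)
  interpret rr: ring R using II unfolding ideal_def by blast
  show ?thesis
  proof (rule ring_hom_memI)
    fix X assume "X \<in> carrier (R Quot I)"
    then obtain x where x: "x \<in> carrier R" "X = I +>\<^bsub>R\<^esub> x" by (rule quot_carrierE)
    show "the_elem (h ` X) \<in> carrier S" unfolding x(2) D[OF x(1)] by (rule h.hom_closed[OF x(1)])
  next
    fix X Y assume "X \<in> carrier (R Quot I)" "Y \<in> carrier (R Quot I)"
    then obtain x y where x: "x \<in> carrier R" "X = I +>\<^bsub>R\<^esub> x" and y: "y \<in> carrier R" "Y = I +>\<^bsub>R\<^esub> y"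
      by (meson quot_carrierE)
    have m: "(I +>\<^bsub>R\<^esub> x) \<otimes>\<^bsub>R Quot I\<^esub> (I +>\<^bsub>R\<^esub> y) = I +>\<^bsub>R\<^esub> (x \<otimes>\<^bsub>R\<^esub> y)" by (rule p.hom_mult[OF x(1) y(1), symmetric])
    have a: "(I +>\<^bsub>R\<^esub> x) \<oplus>\<^bsub>R Quot I\<^esub> (I +>\<^bsub>R\<^esub> y) = I +>\<^bsub>R\<^esub> (x \<oplus>\<^bsub>R\<^esub> y)" by (rule p.hom_add[OF x(1) y(1), symmetric])
    show "the_elem (h ` (X \<otimes>\<^bsub>R Quot I\<^esub> Y)) = the_elem (h ` X) \<otimes>\<^bsub>S\<^esub> the_elem (h ` Y)"
      unfolding x(2) y(2) m D[OF x(1)] D[OF y(1)] D[OF h.R.m_closed[OF x(1) y(1)]] by (rule h.hom_mult[OF x(1) y(1)])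
    show "the_elem (h ` (X \<oplus>\<^bsub>R Quot I\<^esub> Y)) = the_elem (h ` X) \<oplus>\<^bsub>S\<^esub> the_elem (h ` Y)"
      unfolding x(2) y(2) a D[OF x(1)] D[OF y(1)] D[OF h.R.add.m_closed[OF x(1) y(1)]] by (rule h.hom_add[OF x(1) y(1)])
  next
    have "\<one>\<^bsub>R Quot I\<^esub> = I +>\<^bsub>R\<^esub> \<one>\<^bsub>R\<^esub>" unfolding FactRing_def by (simp only: monoid.select_convs)
    then show "the_elem (h ` \<one>\<^bsub>R Quot I\<^esub>) = \<one>\<^bsub>S\<^esub>" using D[OF h.R.one_closed] h.hom_one by simp
  qed
qed

lemma (in ring_hom_ring) hom_minus:
  "x \<in> carrier R \<Longrightarrow> y \<in> carrier R \<Longrightarrow> h (x \<ominus>\<^bsub>R\<^esub> y) = h x \<ominus>\<^bsub>S\<^esub> h y"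
  by (simp add: a_minus_def)

lemma (in ring_hom_ring) hom_finsum_nc:
  assumes "finite I" "\<And>i. i \<in> I \<Longrightarrow> f i \<in> carrier R"
  shows "h (finsum R f I) = finsum S (\<lambda>i. h (f i)) I"
  using assms
proof (induction I rule: finite_induct)
  case empty then show ?case by simp
next
  case (insert x F)
  have "f \<in> F \<rightarrow> carrier R" using insert by auto
  moreover have "(\<lambda>i. h (f i)) \<in> F \<rightarrow> carrier S" using insert by auto
  ultimately show ?case using insert by (simp add: R.finsum_insert S.finsum_insert R.finsum_closed)
qed

locale idem_ring = ring A for A (structure) +
  fixes q assumes q_closed: "q \<in> carrier A" and q_idem: "q \<otimes> q = q"
begin

lemma invc_carrier: "x \<in> inv_carrier A q \<Longrightarrow> x \<in> carrier A" by (simp add: inv_carrier_def)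

lemma invc_iff: "x \<in> inv_carrier A q \<longleftrightarrow> x \<in> carrier A \<and> q \<otimes> x \<otimes> q = q \<otimes> x"
  by (simp add: inv_carrier_def)

lemma invc_one: "\<one> \<in> inv_carrier A q" using q_closed q_idem by (simp add: invc_iff)
lemma invc_q: "q \<in> inv_carrier A q" using q_closed q_idem by (simp add: invc_iff)
lemma invc_zero: "\<zero> \<in> inv_carrier A q" using q_closed by (simp add: invc_iff)

lemma invc_add: "x \<in> inv_carrier A q \<Longrightarrow> y \<in> inv_carrier A q \<Longrightarrow> x \<oplus> y \<in> inv_carrier A q"
  using q_closed by (simp add: invc_iff l_distr r_distr)

lemma invc_mult:
  assumes "x \<in> inv_carrier A q" "y \<in> inv_carrier A q"
  shows "x \<otimes> y \<in> inv_carrier A q"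
proof -
  have x: "x \<in> carrier A" "q \<otimes> x \<otimes> q = q \<otimes> x" and y: "y \<in> carrier A" "q \<otimes> y \<otimes> q = q \<otimes> y"
    using assms by (auto simp: invc_iff)
  note c = x(1) y(1) q_closed
  have "q \<otimes> (x \<otimes> y) \<otimes> q = (q \<otimes> x) \<otimes> (y \<otimes> q)" using c by (simp add: m_assoc)
  also have "\<dots> = (q \<otimes> x \<otimes> q) \<otimes> (y \<otimes> q)" using x(2) by simp
  also have "\<dots> = (q \<otimes> x) \<otimes> (q \<otimes> y \<otimes> q)" using c by (simp add: m_assoc)
  also have "\<dots> = (q \<otimes> x) \<otimes> (q \<otimes> y)" using y(2) by simp
  also have "\<dots> = (q \<otimes> x \<otimes> q) \<otimes> y" using c by (simp add: m_assoc)
  also have "\<dots> = q \<otimes> x \<otimes> y" using x(2) by simp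
  also have "\<dots> = q \<otimes> (x \<otimes> y)" using c by (simp add: m_assoc)
  finally show ?thesis using x y by (simp add: invc_iff)
qed

lemma invc_sm:
  assumes "kalg A sm" "x \<in> inv_carrier A q"
  shows "sm c x \<in> inv_carrier A q"
proof -
  have x: "x \<in> carrier A" "q \<otimes> x \<otimes> q = q \<otimes> x" using assms by (auto simp: invc_iff)
  have "q \<otimes> sm c x \<otimes> q = sm c (q \<otimes> x) \<otimes> q" using kalg_mr[OF assms(1) q_closed x(1)] by simp
  also have "\<dots> = sm c (q \<otimes> x \<otimes> q)" using kalg_ml[OF assms(1), of "q \<otimes> x" q] x q_closed by simp
  also have "\<dots> = q \<otimes> sm c x" using x kalg_mr[OF assms(1) q_closed x(1)] by simp
  finally show ?thesis using x kalg_closed[OF assms(1) x(1)] by (simp add: invc_iff)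
qed

lemma invc_finsum:
  assumes "finite S" "\<And>i. i \<in> S \<Longrightarrow> f i \<in> inv_carrier A q"
  shows "finsum A f S \<in> inv_carrier A q"
  using assms
proof (induction S rule: finite_induct)
  case empty then show ?case by (simp add: invc_zero)
next
  case (insert x F)
  have "f \<in> F \<rightarrow> carrier A" using insert invc_carrier by auto
  then show ?case using insert invc_carrier by (simp add: finsum_insert invc_add)
qed

end

lemma inv_algebra_idem: "inv_algebra A sm q \<Longrightarrow> idem_ring A q"
  unfolding inv_algebra_def idem_ring_def idem_ring_axioms_def using kalg_ring by blast



lemma letter_delta: "tens_letter a = delta [a]"
  by (simp add: tens_letter_def delta_def fun_eq_iff)

lemma delta_carrier: "(delta u :: 'j option list \<Rightarrow> 'k::field) \<in> carrier tens_alg"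
proof -
  have "finite {w. (delta u w :: 'k) \<noteq> 0}" by (rule finite_subset[of _ "{u}"]) (auto simp: delta_def)
  then show ?thesis unfolding tens_carrier by simp
qed

lemma letter_carrier: "(tens_letter a :: 'j option list \<Rightarrow> 'k::field) \<in> carrier tens_alg"
  by (simp add: letter_delta delta_carrier)

abbreviation qt :: "'j option list \<Rightarrow> 'k::field" where "qt \<equiv> tens_letter None"

lemma free_gens_carrier:
  "({qt \<otimes>\<^bsub>tens_alg\<^esub> qt \<ominus>\<^bsub>tens_alg\<^esub> qt} \<union>
      {qt \<otimes>\<^bsub>tens_alg\<^esub> a \<otimes>\<^bsub>tens_alg\<^esub> qt \<ominus>\<^bsub>tens_alg\<^esub> qt \<otimes>\<^bsub>tens_alg\<^esub> a | a. a \<in> carrier tens_alg})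
   \<subseteq> carrier (tens_alg :: ('j option list \<Rightarrow> 'k::field) ring)"
proof -
  interpret ring "tens_alg :: ('j option list \<Rightarrow> 'k::field) ring" by (rule tens_ring)
  show ?thesis using letter_carrier[of None] by auto
qed

lemma free_ideal_ideal: "ideal (free_ideal :: ('j option list \<Rightarrow> 'k::field) set) tens_alg"
proof -
  interpret ring "tens_alg :: ('j option list \<Rightarrow> 'k::field) ring" by (rule tens_ring)
  show ?thesis unfolding free_ideal_def by (rule genideal_ideal[OF free_gens_carrier])
qed

lemma free_gen1: "qt \<otimes>\<^bsub>tens_alg\<^esub> qt \<ominus>\<^bsub>tens_alg\<^esub> qt \<in> (free_ideal :: ('j option list \<Rightarrow> 'k::field) set)"
proof -
  interpret ring "tens_alg :: ('j option list \<Rightarrow> 'k::field) ring" by (rule tens_ring)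
  show ?thesis unfolding free_ideal_def using genideal_self[OF free_gens_carrier] by blast
qed

lemma free_gen2:
  assumes "a \<in> carrier tens_alg"
  shows "qt \<otimes>\<^bsub>tens_alg\<^esub> a \<otimes>\<^bsub>tens_alg\<^esub> qt \<ominus>\<^bsub>tens_alg\<^esub> qt \<otimes>\<^bsub>tens_alg\<^esub> a \<in> (free_ideal :: ('j option list \<Rightarrow> 'k::field) set)"
proof -
  interpret ring "tens_alg :: ('j option list \<Rightarrow> 'k::field) ring" by (rule tens_ring)
  show ?thesis unfolding free_ideal_def using genideal_self[OF free_gens_carrier] assms by blast
qed

lemma free_inv_kalg: "kalg (free_inv :: ('j option list \<Rightarrow> 'k::field) set ring) free_inv_sm"
  unfolding free_inv_def free_inv_sm_def by (rule quot_kalg[OF tens_kalg free_ideal_ideal])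

lemma free_inv_ring: "ring (free_inv :: ('j option list \<Rightarrow> 'k::field) set ring)"
  by (rule kalg_ring[OF free_inv_kalg])

lemma pi0_hom: "ring_hom_ring tens_alg free_inv ((+>\<^bsub>tens_alg\<^esub>) (free_ideal :: ('j option list \<Rightarrow> 'k::field) set))"
  unfolding free_inv_def by (rule ideal.rcos_ring_hom_ring[OF free_ideal_ideal])

lemma pi0_carrier: "F \<in> carrier tens_alg \<Longrightarrow> free_ideal +>\<^bsub>tens_alg\<^esub> F \<in> carrier (free_inv :: ('j option list \<Rightarrow> 'k::field) set ring)"
  unfolding free_inv_def by (rule quot_carrierI)

lemma free_inv_sm_pi0:
  "F \<in> carrier tens_alg \<Longrightarrow> free_inv_sm c (free_ideal +>\<^bsub>tens_alg\<^esub> F) = free_ideal +>\<^bsub>tens_alg\<^esub> tens_sm c (F :: 'j option list \<Rightarrow> 'k::field)"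
  unfolding free_inv_sm_def by (rule quot_sm_rcos[OF tens_kalg free_ideal_ideal])

lemma pi0_eqI:
  assumes "x \<in> carrier tens_alg" "y \<in> carrier tens_alg" "x \<ominus>\<^bsub>tens_alg\<^esub> y \<in> (free_ideal :: ('j option list \<Rightarrow> 'k::field) set)"
  shows "free_ideal +>\<^bsub>tens_alg\<^esub> x = free_ideal +>\<^bsub>tens_alg\<^esub> y"
  using ideal.rcos_eq_iff[OF free_ideal_ideal assms(1,2)] assms(3) by simp

lemma free_inv_q_carrier: "(free_inv_q :: ('j option list \<Rightarrow> 'k::field) set) \<in> carrier free_inv"
  unfolding free_inv_q_def by (rule pi0_carrier[OF letter_carrier])

lemma free_inv_q_idem:
  "(free_inv_q :: ('j option list \<Rightarrow> 'k::field) set) \<otimes>\<^bsub>free_inv\<^esub> free_inv_q = free_inv_q"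
proof -
  interpret p: ring_hom_ring "tens_alg :: ('j option list \<Rightarrow> 'k::field) ring" free_inv "(+>\<^bsub>tens_alg\<^esub>) free_ideal"
    by (rule pi0_hom)
  have c: "(qt :: 'j option list \<Rightarrow> 'k) \<in> carrier tens_alg" by (rule letter_carrier)
  have "(free_inv_q :: ('j option list \<Rightarrow> 'k::field) set) \<otimes>\<^bsub>free_inv\<^esub> free_inv_q
      = free_ideal +>\<^bsub>tens_alg\<^esub> ((qt :: 'j option list \<Rightarrow> 'k) \<otimes>\<^bsub>tens_alg\<^esub> qt)"
    unfolding free_inv_q_def by (rule p.hom_mult[OF c c, symmetric])
  also have "\<dots> = free_ideal +>\<^bsub>tens_alg\<^esub> qt"
    by (rule pi0_eqI[OF p.R.m_closed[OF c c] c free_gen1])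
  finally show ?thesis unfolding free_inv_q_def .
qed



definition cf :: "('k::field \<Rightarrow> 'L::ab_group_add \<Rightarrow> 'L) \<Rightarrow> ('j \<Rightarrow> 'L) \<Rightarrow> 'L \<Rightarrow> 'j option list \<Rightarrow> 'k" where
  "cf sL b x = (\<lambda>w. case w of [Some j] \<Rightarrow> module.representation sL (range b) x (b j) | _ \<Rightarrow> 0)"

lemma hat_i_cf: "hat_i sL b x = free_ideal +>\<^bsub>tens_alg\<^esub> cf sL b x"
  by (simp add: hat_i_def cf_def)

locale setting =
  fixes sL :: "'k::field \<Rightarrow> 'L::ab_group_add \<Rightarrow> 'L" and br :: "'L \<Rightarrow> 'L \<Rightarrow> 'L" and b :: "'j \<Rightarrow> 'L" and k :: 'k
  assumes lie: "lie_algebra sL br" and inj_b: "inj b"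
    and indep: "module.independent sL (range b)" and spans: "module.span sL (range b) = UNIV"
begin

abbreviation "TT \<equiv> (tens_alg :: ('j option list \<Rightarrow> 'k) ring)"
abbreviation "FI \<equiv> (free_inv :: ('j option list \<Rightarrow> 'k) set ring)"
abbreviation "I0 \<equiv> (free_ideal :: ('j option list \<Rightarrow> 'k) set)"
abbreviation "RR \<equiv> rel_ideal sL br b k"
abbreviation "UU \<equiv> env_U sL br b k"
abbreviation "smU \<equiv> env_sm sL br b k"
abbreviation "qU \<equiv> env_q sL br b k"
abbreviation "iU \<equiv> env_i sL br b k"

lemma vs: "vector_space sL" using lie by (simp add: lie_algebra_def)
lemma md: "module sL" using vs by (simp add: module_iff_vector_space)

lemma br_props:
  "br (x + y) z = br x z + br y z" "br x (y + z) = br x y + br x z"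
  "br (sL c x) y = sL c (br x y)" "br x (sL c y) = sL c (br x y)"
  using lie by (simp_all add: lie_algebra_def)

lemma cf_carrier: "cf sL b x \<in> carrier TT"
proof -
  have "{w. cf sL b x w \<noteq> 0} \<subseteq> (\<lambda>j. [Some j]) ` (b -` {v. module.representation sL (range b) x v \<noteq> 0})"
  proof
    fix w assume "w \<in> {w. cf sL b x w \<noteq> 0}"
    then show "w \<in> (\<lambda>j. [Some j]) ` (b -` {v. module.representation sL (range b) x v \<noteq> 0})"
      by (auto simp: cf_def split: list.splits option.splits)
  qed
  moreover have "finite (b -` {v. module.representation sL (range b) x v \<noteq> 0})"
    using inj_b module.finite_representation[OF md] by (intro finite_vimageI) auto
  ultimately show ?thesis unfolding tens_carrier by (auto intro: finite_subset)
qed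

lemma cf_add: "cf sL b (x + y) = cf sL b x \<oplus>\<^bsub>TT\<^esub> cf sL b y"
  using module.representation_add[OF md indep, of y x] spans
  by (auto simp: cf_def tens_add fun_eq_iff split: list.splits option.splits)

lemma cf_scale: "cf sL b (sL c x) = tens_sm c (cf sL b x)"
  using module.representation_scale[OF md indep, of x c] spans
  by (auto simp: cf_def tens_sm_def fun_eq_iff split: list.splits option.splits)

lemma cf_basis: "cf sL b (b j) = delta [Some j]"
proof -
  have r: "module.representation sL (range b) (b j) = (\<lambda>v. if v = b j then 1 else 0)"
    by (rule module.representation_basis[OF md indep]) simp
  show ?thesis
    by (auto simp: cf_def r delta_def fun_eq_iff inj_eq[OF inj_b] split: list.splits option.splits)
qed

lemma hat_carrier: "hat_i sL b x \<in> carrier FI"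
  unfolding hat_i_cf by (rule pi0_carrier[OF cf_carrier])

lemma rel6_carrier: "rel6 sL br b k x y \<in> carrier FI"
proof -
  interpret ring FI by (rule free_inv_ring)
  note c = hat_carrier free_inv_q_carrier kalg_closed[OF free_inv_kalg]
  show ?thesis unfolding rel6_def Let_def by (simp add: c)
qed

lemma RR_ideal: "ideal RR FI"
proof -
  interpret ring FI by (rule free_inv_ring)
  show ?thesis unfolding rel_ideal_def by (rule genideal_ideal) (use rel6_carrier in auto)
qed

lemma rel6_in: "rel6 sL br b k x y \<in> RR"
proof -
  interpret ring FI by (rule free_inv_ring)
  have "{rel6 sL br b k x y |x y. True} \<subseteq> RR" unfolding rel_ideal_def
    by (rule genideal_self) (use rel6_carrier in auto)
  then show ?thesis by blast
qed

lemma UU_kalg: "kalg UU smU"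
  unfolding env_U_def env_sm_def by (rule quot_kalg[OF free_inv_kalg RR_ideal])

lemma UU_ring: "ring UU" by (rule kalg_ring[OF UU_kalg])

lemma pi1_hom: "ring_hom_ring FI UU ((+>\<^bsub>FI\<^esub>) RR)"
  unfolding env_U_def by (rule ideal.rcos_ring_hom_ring[OF RR_ideal])

lemma smU_pi1: "X \<in> carrier FI \<Longrightarrow> smU c (RR +>\<^bsub>FI\<^esub> X) = RR +>\<^bsub>FI\<^esub> free_inv_sm c X"
  unfolding env_sm_def by (rule quot_sm_rcos[OF free_inv_kalg RR_ideal])

definition P :: "('j option list \<Rightarrow> 'k) \<Rightarrow> ('j option list \<Rightarrow> 'k) set set" where
  "P F = RR +>\<^bsub>FI\<^esub> (I0 +>\<^bsub>TT\<^esub> F)"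

lemma P_hom: "ring_hom_ring TT UU P"
proof -
  have "((+>\<^bsub>FI\<^esub>) RR) \<circ> ((+>\<^bsub>TT\<^esub>) I0) \<in> ring_hom TT UU"
    by (rule ring_hom_trans[OF ring_hom_ring.homh[OF pi0_hom] ring_hom_ring.homh[OF pi1_hom]])
  moreover have "((+>\<^bsub>FI\<^esub>) RR) \<circ> ((+>\<^bsub>TT\<^esub>) I0) = P" by (simp add: P_def fun_eq_iff)
  ultimately show ?thesis
    by (intro ring_hom_ringI2 tens_ring UU_ring) simp
qed

lemma P_sm: "F \<in> carrier TT \<Longrightarrow> P (tens_sm c F) = smU c (P F)"
proof -
  assume F: "F \<in> carrier TT"
  have "free_inv_sm c (I0 +>\<^bsub>TT\<^esub> F) = I0 +>\<^bsub>TT\<^esub> tens_sm c F" by (rule free_inv_sm_pi0[OF F])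
  then show ?thesis unfolding P_def using smU_pi1[OF pi0_carrier[OF F]] by simp
qed

lemma iU_P: "iU x = P (cf sL b x)"
  by (simp add: env_i_def P_def hat_i_cf)

lemma qU_P: "qU = P qt"
  by (simp add: env_q_def P_def free_inv_q_def)

lemma P_I0: "F \<in> I0 \<Longrightarrow> P F = \<zero>\<^bsub>UU\<^esub>"
proof -
  assume F: "F \<in> I0"
  interpret ideal I0 TT by (rule free_ideal_ideal)
  have "I0 +>\<^bsub>TT\<^esub> F = I0" by (rule a_rcos_const[OF F])
  moreover have "RR +>\<^bsub>FI\<^esub> I0 = RR"
  proof -
    interpret r: ideal RR FI by (rule RR_ideal)
    have "I0 = \<zero>\<^bsub>FI\<^esub>" by (simp add: free_inv_def FactRing_def)
    then show ?thesis using r.a_rcos_const[OF additive_subgroup.zero_closed[OF r.additive_subgroup_axioms]] by simp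
  qed
  moreover have "\<zero>\<^bsub>UU\<^esub> = RR" by (simp add: env_U_def FactRing_def)
  ultimately show ?thesis by (simp add: P_def)
qed

end



lemma (in ring) minus_zero_eq:
  assumes "a \<in> carrier R" "b \<in> carrier R" "a \<ominus> b = \<zero>" shows "a = b"
proof -
  have "a = (a \<ominus> b) \<oplus> b" using assms(1,2) by algebra
  then show ?thesis using assms by simp
qed

lemma (in ring) six_terms:
  assumes "H \<in> carrier R" "a \<in> carrier R" "b \<in> carrier R" "c \<in> carrier R" "d \<in> carrier R" "e \<in> carrier R" "f \<in> carrier R"
  shows "H = (H \<ominus> a \<oplus> b \<oplus> c \<ominus> d \<ominus> e \<oplus> f) \<oplus> (a \<ominus> b \<ominus> c \<oplus> d \<oplus> e \<ominus> f)"
  using assms by algebra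

context setting begin

lemma P_carrier: "F \<in> carrier TT \<Longrightarrow> P F \<in> carrier UU"
proof -
  interpret p: ring_hom_ring TT UU P by (rule P_hom)
  show "F \<in> carrier TT \<Longrightarrow> P F \<in> carrier UU" by simp
qed

lemma P_eqI:
  assumes "x \<in> carrier TT" "y \<in> carrier TT" "x \<ominus>\<^bsub>TT\<^esub> y \<in> I0"
  shows "P x = P y"
proof -
  interpret p: ring_hom_ring TT UU P by (rule P_hom)
  have "P x \<ominus>\<^bsub>UU\<^esub> P y = P (x \<ominus>\<^bsub>TT\<^esub> y)" using assms by (simp add: p.hom_minus)
  also have "\<dots> = \<zero>\<^bsub>UU\<^esub>" by (rule P_I0[OF assms(3)])
  finally show ?thesis using p.S.minus_zero_eq assms by simp
qed

lemma qU_carrier: "qU \<in> carrier UU"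
  unfolding qU_P by (rule P_carrier[OF letter_carrier])

lemma qU_idem: "qU \<otimes>\<^bsub>UU\<^esub> qU = qU"
proof -
  interpret p: ring_hom_ring TT UU P by (rule P_hom)
  have c: "qt \<in> carrier TT" by (rule letter_carrier)
  have "qU \<otimes>\<^bsub>UU\<^esub> qU = P (qt \<otimes>\<^bsub>TT\<^esub> qt)" unfolding qU_P using c by simp
  also have "\<dots> = P qt" by (rule P_eqI[OF p.R.m_closed[OF c c] c free_gen1])
  finally show ?thesis unfolding qU_P .
qed

lemma UU_inv_algebra: "inv_algebra UU smU qU"
  unfolding inv_algebra_def using UU_kalg qU_carrier qU_idem by simp

lemma iU_carrier: "iU x \<in> carrier UU"
  unfolding iU_P by (rule P_carrier[OF cf_carrier])

lemma iU_inv: "iU x \<in> inv_carrier UU qU"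
proof -
  interpret p: ring_hom_ring TT UU P by (rule P_hom)
  have c: "qt \<in> carrier TT" by (rule letter_carrier)
  have a: "cf sL b x \<in> carrier TT" by (rule cf_carrier)
  have "qU \<otimes>\<^bsub>UU\<^esub> iU x \<otimes>\<^bsub>UU\<^esub> qU = P (qt \<otimes>\<^bsub>TT\<^esub> cf sL b x \<otimes>\<^bsub>TT\<^esub> qt)"
    unfolding qU_P iU_P using a c by simp
  also have "\<dots> = P (qt \<otimes>\<^bsub>TT\<^esub> cf sL b x)"
    by (rule P_eqI) (use a c free_gen2[OF a] in auto)
  also have "\<dots> = qU \<otimes>\<^bsub>UU\<^esub> iU x" unfolding qU_P iU_P using a c by simp
  finally show ?thesis using iU_carrier by (simp add: inv_carrier_def)
qed

lemma iU_add: "iU (x + y) = iU x \<oplus>\<^bsub>UU\<^esub> iU y"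
proof -
  interpret p: ring_hom_ring TT UU P by (rule P_hom)
  show ?thesis unfolding iU_P cf_add using cf_carrier by simp
qed

lemma iU_scale: "iU (sL c x) = smU c (iU x)"
  unfolding iU_P cf_scale by (rule P_sm[OF cf_carrier])

lemma pi1_zero: "X \<in> RR \<Longrightarrow> RR +>\<^bsub>FI\<^esub> X = \<zero>\<^bsub>UU\<^esub>"
proof -
  assume X: "X \<in> RR"
  interpret r: ideal RR FI by (rule RR_ideal)
  have "RR +>\<^bsub>FI\<^esub> X = RR" by (rule r.a_rcos_const[OF X])
  moreover have "\<zero>\<^bsub>UU\<^esub> = RR" by (simp add: env_U_def FactRing_def)
  ultimately show ?thesis by simp
qed

lemma iU_br: "iU (br x y) = br6 UU smU qU k (iU x) (iU y)"
proof -
  interpret p: ring_hom_ring FI UU "(+>\<^bsub>FI\<^esub>) RR" by (rule pi1_hom)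
  let ?p = "(+>\<^bsub>FI\<^esub>) RR"
  define X where "X = hat_i sL b x"
  define Y where "Y = hat_i sL b y"
  define H where "H = hat_i sL b (br x y)"
  define Q where "Q = (free_inv_q :: ('j option list \<Rightarrow> 'k) set)"
  have c: "X \<in> carrier FI" "Y \<in> carrier FI" "H \<in> carrier FI" "Q \<in> carrier FI"
    unfolding X_def Y_def H_def Q_def by (simp_all add: hat_carrier free_inv_q_carrier)
  have smc: "\<And>c Z. Z \<in> carrier FI \<Longrightarrow> free_inv_sm c Z \<in> carrier FI" by (rule kalg_closed[OF free_inv_kalg])
  have psm: "\<And>c Z. Z \<in> carrier FI \<Longrightarrow> ?p (free_inv_sm c Z) = smU c (?p Z)" by (rule smU_pi1[symmetric])
  have e: "iU x = ?p X" "iU y = ?p Y" "iU (br x y) = ?p H" "qU = ?p Q"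
    unfolding X_def Y_def H_def Q_def env_i_def env_q_def by simp_all
  define a where "a = ?p X \<otimes>\<^bsub>UU\<^esub> ?p Y"
  define bb where "bb = ?p Y \<otimes>\<^bsub>UU\<^esub> ?p X"
  define cc where "cc = ?p X \<otimes>\<^bsub>UU\<^esub> ?p Y \<otimes>\<^bsub>UU\<^esub> ?p Q"
  define d where "d = ?p Y \<otimes>\<^bsub>UU\<^esub> ?p X \<otimes>\<^bsub>UU\<^esub> ?p Q"
  define ee where "ee = smU k (?p X \<otimes>\<^bsub>UU\<^esub> ?p Q \<otimes>\<^bsub>UU\<^esub> ?p Y)"
  define ff where "ff = smU k (?p Y \<otimes>\<^bsub>UU\<^esub> ?p Q \<otimes>\<^bsub>UU\<^esub> ?p X)"
  have pc: "?p X \<in> carrier UU" "?p Y \<in> carrier UU" "?p H \<in> carrier UU" "?p Q \<in> carrier UU"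
    using c by simp_all
  have smUc: "\<And>c Z. Z \<in> carrier UU \<Longrightarrow> smU c Z \<in> carrier UU" by (rule kalg_closed[OF UU_kalg])
  have cs: "a \<in> carrier UU" "bb \<in> carrier UU" "cc \<in> carrier UU" "d \<in> carrier UU" "ee \<in> carrier UU" "ff \<in> carrier UU"
    unfolding a_def bb_def cc_def d_def ee_def ff_def using pc smUc by simp_all
  have "?p (rel6 sL br b k x y) = ?p H \<ominus>\<^bsub>UU\<^esub> a \<oplus>\<^bsub>UU\<^esub> bb \<oplus>\<^bsub>UU\<^esub> cc \<ominus>\<^bsub>UU\<^esub> d \<ominus>\<^bsub>UU\<^esub> ee \<oplus>\<^bsub>UU\<^esub> ff"
    unfolding rel6_def Let_def X_def[symmetric] Y_def[symmetric] H_def[symmetric] Q_def[symmetric]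
      a_def bb_def cc_def d_def ee_def ff_def
    using c smc by (simp add: p.hom_minus psm)
  moreover have "?p (rel6 sL br b k x y) = \<zero>\<^bsub>UU\<^esub>" by (rule pi1_zero[OF rel6_in])
  ultimately have z: "?p H \<ominus>\<^bsub>UU\<^esub> a \<oplus>\<^bsub>UU\<^esub> bb \<oplus>\<^bsub>UU\<^esub> cc \<ominus>\<^bsub>UU\<^esub> d \<ominus>\<^bsub>UU\<^esub> ee \<oplus>\<^bsub>UU\<^esub> ff = \<zero>\<^bsub>UU\<^esub>" by simp
  have "?p H = (?p H \<ominus>\<^bsub>UU\<^esub> a \<oplus>\<^bsub>UU\<^esub> bb \<oplus>\<^bsub>UU\<^esub> cc \<ominus>\<^bsub>UU\<^esub> d \<ominus>\<^bsub>UU\<^esub> ee \<oplus>\<^bsub>UU\<^esub> ff)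
      \<oplus>\<^bsub>UU\<^esub> (a \<ominus>\<^bsub>UU\<^esub> bb \<ominus>\<^bsub>UU\<^esub> cc \<oplus>\<^bsub>UU\<^esub> d \<oplus>\<^bsub>UU\<^esub> ee \<ominus>\<^bsub>UU\<^esub> ff)"
    by (rule p.S.six_terms) (use cs pc in auto)
  also have "\<dots> = a \<ominus>\<^bsub>UU\<^esub> bb \<ominus>\<^bsub>UU\<^esub> cc \<oplus>\<^bsub>UU\<^esub> d \<oplus>\<^bsub>UU\<^esub> ee \<ominus>\<^bsub>UU\<^esub> ff"
    unfolding z using cs by simp
  finally show ?thesis unfolding e br6_def a_def bb_def cc_def d_def ee_def ff_def .
qed

lemma iU_lie_hom: "lie_hom6 sL br k UU smU qU iU"
  unfolding lie_hom6_def using iU_inv iU_add iU_scale iU_br by blast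

end



lemma tens_finsum:
  assumes "finite I" "\<And>i. i \<in> I \<Longrightarrow> H i \<in> carrier (tens_alg :: ('j option list \<Rightarrow> 'k::field) ring)"
  shows "finsum (tens_alg :: ('j option list \<Rightarrow> 'k::field) ring) H I = (\<lambda>w. \<Sum>i\<in>I. H i w)"
  using assms
proof (induction I rule: finite_induct)
  case empty
  interpret ring "tens_alg :: ('j option list \<Rightarrow> 'k::field) ring" by (rule tens_ring)
  show ?case by (simp add: tens_zero)
next
  case (insert x F)
  interpret ring "tens_alg :: ('j option list \<Rightarrow> 'k::field) ring" by (rule tens_ring)
  have "H \<in> F \<rightarrow> carrier tens_alg" using insert by auto
  then show ?case using insert by (simp add: finsum_insert tens_add)
qed

lemma tens_expand:
  assumes "F \<in> carrier (tens_alg :: ('j option list \<Rightarrow> 'k::field) ring)"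
  shows "F = finsum (tens_alg :: ('j option list \<Rightarrow> 'k::field) ring) (\<lambda>u. tens_sm (F u) (delta u)) {w. F w \<noteq> 0}"
proof -
  have fin: "finite {w. F w \<noteq> 0}" using assms by (simp add: tens_carrier)
  have c: "\<And>u. tens_sm (F u) (delta u) \<in> carrier (tens_alg :: ('j option list \<Rightarrow> 'k::field) ring)"
    using kalg_closed[OF tens_kalg delta_carrier] .
  show ?thesis
    by (subst tens_finsum[OF fin c]) (subst expand_fun[OF fin subset_refl], simp add: tens_sm_def)
qed

locale univ = setting sL br b k
  for sL :: "'k::field \<Rightarrow> 'L::ab_group_add \<Rightarrow> 'L" and br :: "'L \<Rightarrow> 'L \<Rightarrow> 'L" and b :: "'j \<Rightarrow> 'L" and k :: 'k +
  fixes A :: "'b ring" and smA :: "'k \<Rightarrow> 'b \<Rightarrow> 'b" and qA :: 'b and f :: "'L \<Rightarrow> 'b"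
  assumes invA: "inv_algebra A smA qA" and fhom: "lie_hom6 sL br k A smA qA f"
begin

definition gA :: "'j option \<Rightarrow> 'b" where
  "gA a = (case a of Some j \<Rightarrow> f (b j) | None \<Rightarrow> qA)"

lemma kalgA: "kalg A smA" using invA by (simp add: inv_algebra_def)
lemma ringA: "ring A" by (rule kalg_ring[OF kalgA])
lemma idemA: "idem_ring A qA" by (rule inv_algebra_idem[OF invA])

lemma f_inv: "f x \<in> inv_carrier A qA" using fhom by (simp add: lie_hom6_def)
lemma f_carrier: "f x \<in> carrier A" using f_inv by (simp add: inv_carrier_def)
lemma f_add: "f (x + y) = f x \<oplus>\<^bsub>A\<^esub> f y" using fhom by (simp add: lie_hom6_def)
lemma f_scale: "f (sL c x) = smA c (f x)" using fhom by (simp add: lie_hom6_def)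
lemma f_br: "f (br x y) = br6 A smA qA k (f x) (f y)" using fhom by (simp add: lie_hom6_def)

lemma gA_inv: "gA a \<in> inv_carrier A qA"
  using f_inv idem_ring.invc_q[OF idemA] by (cases a) (simp_all add: gA_def)

lemma gA_carrier: "gA a \<in> carrier A"
  using gA_inv by (simp add: inv_carrier_def)

sublocale ph: phictx A smA gA
  by unfold_locales (rule kalgA, rule gA_carrier)

abbreviation "Phi \<equiv> phi A smA gA"

lemma word_inv: "wordA A gA w \<in> inv_carrier A qA"
proof (induction w)
  case Nil then show ?case by (simp add: ph.word_Nil idem_ring.invc_one[OF idemA])
next
  case (Cons a w) then show ?case
    by (simp add: ph.word_Cons idem_ring.invc_mult[OF idemA] gA_inv)
qed

lemma Phi_inv: "Phi F \<in> inv_carrier A qA"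
proof (cases "finite {w. F w \<noteq> 0}")
  case True
  show ?thesis unfolding phi_def
    by (rule idem_ring.invc_finsum[OF idemA True]) (simp add: idem_ring.invc_sm[OF idemA kalgA] word_inv)
next
  case False
  then show ?thesis unfolding phi_def by (simp add: ph.finsum_infinite idem_ring.invc_zero[OF idemA])
qed

lemma Phi_hom: "ring_hom_ring TT A Phi"
  by (intro ring_hom_ringI2 tens_ring ringA ph.phi_hom)

lemma Phi_qt: "Phi qt = qA"
  by (simp add: letter_delta ph.phi_delta ph.word_Cons ph.word_Nil gA_def idem_ring.q_closed[OF idemA])

lemma Phi_sm: "F \<in> carrier TT \<Longrightarrow> Phi (tens_sm c F) = smA c (Phi F)"
  unfolding tens_sm_def by (rule ph.phi_scale) (simp add: tens_carrier)

lemma f_zero: "f 0 = \<zero>\<^bsub>A\<^esub>"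
proof -
  have "f 0 = f 0 \<oplus>\<^bsub>A\<^esub> f 0" using f_add[of 0 0] by simp
  then have "f 0 \<ominus>\<^bsub>A\<^esub> f 0 = (f 0 \<oplus>\<^bsub>A\<^esub> f 0) \<ominus>\<^bsub>A\<^esub> f 0" by simp
  then show ?thesis using f_carrier[of 0]
    by (simp add: a_minus_def ph.a_assoc ph.r_neg)
qed

lemma f_sum: "finite I \<Longrightarrow> f (\<Sum>i\<in>I. h i) = finsum A (\<lambda>i. f (h i)) I"
proof (induction I rule: finite_induct)
  case empty then show ?case by (simp add: f_zero)
next
  case (insert x F)
  have "(\<lambda>i. f (h i)) \<in> F \<rightarrow> carrier A" by (simp add: f_carrier)
  then show ?case using insert by (simp add: f_add ph.finsum_insert f_carrier)
qed

lemma Phi_cf: "Phi (cf sL b x) = f x"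
proof -
  let ?r = "module.representation sL (range b) x"
  define V0 where "V0 = {v. ?r v \<noteq> 0}"
  define J0 where "J0 = b -` V0"
  have finV: "finite V0" unfolding V0_def by (rule module.finite_representation[OF md])
  have V0sub: "V0 \<subseteq> range b" unfolding V0_def using module.representation_ne_zero[OF md] by blast
  have finJ: "finite J0" unfolding J0_def using finV inj_b by (intro finite_vimageI) auto
  have V0J: "V0 = b ` J0" unfolding J0_def using V0sub by auto
  have "Phi (cf sL b x) = finsum A (\<lambda>w. smA (cf sL b x w) (wordA A gA w)) ((\<lambda>j. [Some j]) ` J0)"
  proof (rule ph.phi_eq)
    show "finite ((\<lambda>j. [Some j]) ` J0)" using finJ by simp
    show "{w. cf sL b x w \<noteq> 0} \<subseteq> (\<lambda>j. [Some j]) ` J0"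
    proof
      fix w assume "w \<in> {w. cf sL b x w \<noteq> 0}"
      then show "w \<in> (\<lambda>j. [Some j]) ` J0"
        by (auto simp: cf_def J0_def V0_def split: list.splits option.splits)
    qed
  qed
  also have "\<dots> = finsum A (\<lambda>j. smA (cf sL b x [Some j]) (wordA A gA [Some j])) J0"
    by (subst ph.finsum_reindex) (auto simp: inj_on_def)
  also have "\<dots> = finsum A (\<lambda>j. smA (?r (b j)) (f (b j))) J0"
    by (rule ph.finsum_cong') (auto simp: cf_def ph.word_Cons ph.word_Nil gA_def f_carrier)
  also have "\<dots> = finsum A (\<lambda>v. smA (?r v) (f v)) V0"
    unfolding V0J by (subst ph.finsum_reindex) (auto simp: f_carrier inj_on_def inj_eq[OF inj_b])
  also have "\<dots> = finsum A (\<lambda>v. f (sL (?r v) v)) V0"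
    by (rule ph.finsum_cong') (auto simp: f_scale f_carrier)
  also have "\<dots> = f (\<Sum>v\<in>V0. sL (?r v) v)" by (rule f_sum[OF finV, symmetric])
  also have "(\<Sum>v\<in>V0. sL (?r v) v) = x"
    unfolding V0_def by (rule module.sum_nonzero_representation_eq[OF md indep]) (simp add: spans)
  finally show ?thesis .
qed

lemma Phi_kernel: "\<forall>i\<in>I0. Phi i = \<zero>\<^bsub>A\<^esub>"
proof -
  interpret p: ring_hom_ring TT A Phi by (rule Phi_hom)
  have qc: "qt \<in> carrier TT" by (rule letter_carrier)
  have qA: "qA \<in> carrier A" by (rule idem_ring.q_closed[OF idemA])
  have gens: "({qt \<otimes>\<^bsub>TT\<^esub> qt \<ominus>\<^bsub>TT\<^esub> qt} \<union>
      {qt \<otimes>\<^bsub>TT\<^esub> a \<otimes>\<^bsub>TT\<^esub> qt \<ominus>\<^bsub>TT\<^esub> qt \<otimes>\<^bsub>TT\<^esub> a | a. a \<in> carrier TT}) \<subseteq> a_kernel TT A Phi"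
  proof
    fix z assume "z \<in> {qt \<otimes>\<^bsub>TT\<^esub> qt \<ominus>\<^bsub>TT\<^esub> qt} \<union>
      {qt \<otimes>\<^bsub>TT\<^esub> a \<otimes>\<^bsub>TT\<^esub> qt \<ominus>\<^bsub>TT\<^esub> qt \<otimes>\<^bsub>TT\<^esub> a | a. a \<in> carrier TT}"
    then show "z \<in> a_kernel TT A Phi"
    proof
      assume "z \<in> {qt \<otimes>\<^bsub>TT\<^esub> qt \<ominus>\<^bsub>TT\<^esub> qt}"
      then have z: "z = qt \<otimes>\<^bsub>TT\<^esub> qt \<ominus>\<^bsub>TT\<^esub> qt" by simp
      have "Phi z = qA \<otimes>\<^bsub>A\<^esub> qA \<ominus>\<^bsub>A\<^esub> qA" unfolding z using qc by (simp add: p.hom_minus Phi_qt)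
      also have "\<dots> = \<zero>\<^bsub>A\<^esub>" using qA idem_ring.q_idem[OF idemA] by (simp add: ph.r_neg a_minus_def)
      finally show ?thesis unfolding a_kernel_def' using z qc by simp
    next
      assume "z \<in> {qt \<otimes>\<^bsub>TT\<^esub> a \<otimes>\<^bsub>TT\<^esub> qt \<ominus>\<^bsub>TT\<^esub> qt \<otimes>\<^bsub>TT\<^esub> a | a. a \<in> carrier TT}"
      then obtain a where a: "a \<in> carrier TT" and z: "z = qt \<otimes>\<^bsub>TT\<^esub> a \<otimes>\<^bsub>TT\<^esub> qt \<ominus>\<^bsub>TT\<^esub> qt \<otimes>\<^bsub>TT\<^esub> a" by blast
      have inv: "qA \<otimes>\<^bsub>A\<^esub> Phi a \<otimes>\<^bsub>A\<^esub> qA = qA \<otimes>\<^bsub>A\<^esub> Phi a" using Phi_inv[of a] by (simp add: inv_carrier_def)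
      have "Phi z = qA \<otimes>\<^bsub>A\<^esub> Phi a \<otimes>\<^bsub>A\<^esub> qA \<ominus>\<^bsub>A\<^esub> qA \<otimes>\<^bsub>A\<^esub> Phi a" unfolding z using qc a by (simp add: p.hom_minus Phi_qt)
      also have "\<dots> = \<zero>\<^bsub>A\<^esub>" unfolding inv using qA a by (simp add: ph.r_neg a_minus_def)
      finally show ?thesis unfolding a_kernel_def' using z qc a by simp
    qed
  qed
  have "I0 \<subseteq> a_kernel TT A Phi"
    unfolding free_ideal_def by (rule p.R.genideal_minimal[OF p.kernel_is_ideal gens])
  then show ?thesis unfolding a_kernel_def' by blast
qed

definition psi :: "('j option list \<Rightarrow> 'k) set \<Rightarrow> 'b" where "psi X = the_elem (Phi ` X)"

lemma psi_hom: "ring_hom_ring FI A psi"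
proof -
  have "psi \<in> ring_hom FI A" unfolding psi_def[abs_def] free_inv_def
    by (rule descend_hom[OF Phi_hom free_ideal_ideal Phi_kernel])
  then show ?thesis by (intro ring_hom_ringI2 free_inv_ring ringA)
qed

lemma psi_eq: "F \<in> carrier TT \<Longrightarrow> psi (I0 +>\<^bsub>TT\<^esub> F) = Phi F"
  unfolding psi_def by (rule descend_eq[OF Phi_hom free_ideal_ideal Phi_kernel])

lemma psi_sm: "X \<in> carrier FI \<Longrightarrow> psi (free_inv_sm c X) = smA c (psi X)"
proof -
  assume "X \<in> carrier FI"
  then obtain F where F: "F \<in> carrier TT" "X = I0 +>\<^bsub>TT\<^esub> F" unfolding free_inv_def by (rule quot_carrierE)
  have "free_inv_sm c X = I0 +>\<^bsub>TT\<^esub> tens_sm c F" unfolding F(2) by (rule free_inv_sm_pi0[OF F(1)])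
  then show ?thesis using F psi_eq Phi_sm kalg_closed[OF tens_kalg F(1)] by simp
qed

lemma psi_hat: "psi (hat_i sL b x) = f x"
  unfolding hat_i_cf by (simp add: psi_eq[OF cf_carrier] Phi_cf)

lemma psi_q: "psi free_inv_q = qA"
  unfolding free_inv_q_def by (simp add: psi_eq[OF letter_carrier] Phi_qt)

end



lemma (in ring) six_terms_zero:
  assumes "a \<in> carrier R" "b \<in> carrier R" "c \<in> carrier R" "d \<in> carrier R" "e \<in> carrier R" "f \<in> carrier R"
  shows "(a \<ominus> b \<ominus> c \<oplus> d \<oplus> e \<ominus> f) \<ominus> a \<oplus> b \<oplus> c \<ominus> d \<ominus> e \<oplus> f = \<zero>"
proof -
  let ?S = "a \<ominus> b \<ominus> c \<oplus> d \<oplus> e \<ominus> f"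
  have S: "?S \<in> carrier R" using assms by simp
  have "?S = (?S \<ominus> a \<oplus> b \<oplus> c \<ominus> d \<ominus> e \<oplus> f) \<oplus> ?S"
    by (rule six_terms[OF S assms])
  moreover have "?S \<ominus> a \<oplus> b \<oplus> c \<ominus> d \<ominus> e \<oplus> f \<in> carrier R" using assms by simp
  ultimately show ?thesis using S add.r_cancel_one' by blast
qed

context univ begin

lemma psi_rel6: "psi (rel6 sL br b k x y) = \<zero>\<^bsub>A\<^esub>"
proof -
  interpret p: ring_hom_ring FI A psi by (rule psi_hom)
  define X where "X = hat_i sL b x"
  define Y where "Y = hat_i sL b y"
  define H where "H = hat_i sL b (br x y)"
  define Q where "Q = (free_inv_q :: ('j option list \<Rightarrow> 'k) set)"
  have c: "X \<in> carrier FI" "Y \<in> carrier FI" "H \<in> carrier FI" "Q \<in> carrier FI"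
    unfolding X_def Y_def H_def Q_def by (simp_all add: hat_carrier free_inv_q_carrier)
  have smc: "\<And>c Z. Z \<in> carrier FI \<Longrightarrow> free_inv_sm c Z \<in> carrier FI" by (rule kalg_closed[OF free_inv_kalg])
  have e: "psi X = f x" "psi Y = f y" "psi H = f (br x y)" "psi Q = qA"
    unfolding X_def Y_def H_def Q_def by (simp_all add: psi_hat psi_q)
  have qA: "qA \<in> carrier A" by (rule idem_ring.q_closed[OF idemA])
  have "psi (rel6 sL br b k x y) = psi H \<ominus>\<^bsub>A\<^esub> psi X \<otimes>\<^bsub>A\<^esub> psi Y \<oplus>\<^bsub>A\<^esub> psi Y \<otimes>\<^bsub>A\<^esub> psi X
        \<oplus>\<^bsub>A\<^esub> psi X \<otimes>\<^bsub>A\<^esub> psi Y \<otimes>\<^bsub>A\<^esub> psi Q \<ominus>\<^bsub>A\<^esub> psi Y \<otimes>\<^bsub>A\<^esub> psi X \<otimes>\<^bsub>A\<^esub> psi Q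
        \<ominus>\<^bsub>A\<^esub> smA k (psi X \<otimes>\<^bsub>A\<^esub> psi Q \<otimes>\<^bsub>A\<^esub> psi Y)
        \<oplus>\<^bsub>A\<^esub> smA k (psi Y \<otimes>\<^bsub>A\<^esub> psi Q \<otimes>\<^bsub>A\<^esub> psi X)"
    unfolding rel6_def Let_def X_def[symmetric] Y_def[symmetric] H_def[symmetric] Q_def[symmetric]
    using c smc by (simp add: p.hom_minus psi_sm)
  also have "\<dots> = f (br x y) \<ominus>\<^bsub>A\<^esub> f x \<otimes>\<^bsub>A\<^esub> f y \<oplus>\<^bsub>A\<^esub> f y \<otimes>\<^bsub>A\<^esub> f x
        \<oplus>\<^bsub>A\<^esub> f x \<otimes>\<^bsub>A\<^esub> f y \<otimes>\<^bsub>A\<^esub> qA \<ominus>\<^bsub>A\<^esub> f y \<otimes>\<^bsub>A\<^esub> f x \<otimes>\<^bsub>A\<^esub> qA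
        \<ominus>\<^bsub>A\<^esub> smA k (f x \<otimes>\<^bsub>A\<^esub> qA \<otimes>\<^bsub>A\<^esub> f y)
        \<oplus>\<^bsub>A\<^esub> smA k (f y \<otimes>\<^bsub>A\<^esub> qA \<otimes>\<^bsub>A\<^esub> f x)"
    unfolding e ..
  also have "\<dots> = \<zero>\<^bsub>A\<^esub>" unfolding f_br br6_def
    by (rule ph.six_terms_zero) (use f_carrier qA in simp_all)
  finally show ?thesis .
qed

lemma psi_kernel: "\<forall>X\<in>RR. psi X = \<zero>\<^bsub>A\<^esub>"
proof -
  interpret p: ring_hom_ring FI A psi by (rule psi_hom)
  have "{rel6 sL br b k x y |x y. True} \<subseteq> a_kernel FI A psi"
  proof
    fix z assume "z \<in> {rel6 sL br b k x y |x y. True}"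
    then obtain x y where z: "z = rel6 sL br b k x y" by blast
    have "z \<in> {z \<in> carrier FI. psi z = \<zero>\<^bsub>A\<^esub>}" unfolding z using psi_rel6 rel6_carrier by blast
    then show "z \<in> a_kernel FI A psi" by (simp only: a_kernel_def')
  qed
  then have "RR \<subseteq> a_kernel FI A psi"
    unfolding rel_ideal_def by (rule p.R.genideal_minimal[OF p.kernel_is_ideal])
  then show ?thesis unfolding a_kernel_def' by blast
qed

definition fp :: "('j option list \<Rightarrow> 'k) set set \<Rightarrow> 'b" where "fp X = the_elem (psi ` X)"

lemma fp_hom: "ring_hom_ring UU A fp"
proof -
  have "fp \<in> ring_hom UU A" unfolding fp_def[abs_def] env_U_def
    by (rule descend_hom[OF psi_hom RR_ideal psi_kernel])
  then show ?thesis by (intro ring_hom_ringI2 UU_ring ringA)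
qed

lemma fp_P: "F \<in> carrier TT \<Longrightarrow> fp (P F) = Phi F"
  unfolding fp_def P_def
  by (simp add: descend_eq[OF psi_hom RR_ideal psi_kernel pi0_carrier] psi_eq)

lemma P_surj:
  assumes "X \<in> carrier UU" obtains F where "F \<in> carrier TT" "X = P F"
proof -
  obtain Y where Y: "Y \<in> carrier FI" "X = RR +>\<^bsub>FI\<^esub> Y" using assms unfolding env_U_def by (rule quot_carrierE)
  obtain F where F: "F \<in> carrier TT" "Y = I0 +>\<^bsub>TT\<^esub> F" using Y(1) unfolding free_inv_def by (rule quot_carrierE)
  show ?thesis by (rule that[OF F(1)]) (simp add: P_def F(2) Y(2))
qed

lemma fp_inv_hom: "inv_hom UU smU qU A smA qA fp"
proof -
  interpret p: ring_hom_ring UU A fp by (rule fp_hom)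
  have incl: "\<And>X. X \<in> inv_carrier UU qU \<Longrightarrow> X \<in> carrier UU" by (simp add: inv_carrier_def)
  have 1: "fp X \<in> inv_carrier A qA" if XX: "X \<in> carrier UU" for X
  proof -
    obtain F where "F \<in> carrier TT" "X = P F" using XX by (rule P_surj)
    then show ?thesis using fp_P Phi_inv by simp
  qed
  have 2: "fp (smU c X) = smA c (fp X)" if XX: "X \<in> carrier UU" for c X
  proof -
    obtain F where F: "F \<in> carrier TT" "X = P F" using XX by (rule P_surj)
    show ?thesis unfolding F(2) P_sm[OF F(1), symmetric] fp_P[OF kalg_closed[OF tens_kalg F(1)]] fp_P[OF F(1)]
      Phi_sm[OF F(1)] ..
  qed
  have 3: "fp qU = qA" unfolding qU_P using fp_P[OF letter_carrier] Phi_qt by simp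
  show ?thesis unfolding inv_hom_def using 1 2 3 incl by simp
qed

lemma fp_iU: "f x = fp (iU x)"
  unfolding iU_P using fp_P[OF cf_carrier] Phi_cf by simp

lemma uniq:
  assumes g: "inv_hom UU smU qU A smA qA g" and gf: "\<forall>x. f x = g (iU x)" and u: "u \<in> carrier UU"
  shows "g u = fp u"
proof -
  have idU: "idem_ring UU qU" by (rule inv_algebra_idem[OF UU_inv_algebra])
  interpret U: idem_ring UU qU by (rule idU)
  interpret Ai: idem_ring A qA by (rule idemA)
  have ginv: "\<And>X. X \<in> inv_carrier UU qU \<Longrightarrow> g X \<in> inv_carrier A qA"
   and gadd: "\<And>X Y. X \<in> inv_carrier UU qU \<Longrightarrow> Y \<in> inv_carrier UU qU \<Longrightarrow> g (X \<oplus>\<^bsub>UU\<^esub> Y) = g X \<oplus>\<^bsub>A\<^esub> g Y"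
   and gsm: "\<And>c X. X \<in> inv_carrier UU qU \<Longrightarrow> g (smU c X) = smA c (g X)"
   and gmult: "\<And>X Y. X \<in> inv_carrier UU qU \<Longrightarrow> Y \<in> inv_carrier UU qU \<Longrightarrow> g (X \<otimes>\<^bsub>UU\<^esub> Y) = g X \<otimes>\<^bsub>A\<^esub> g Y"
   and gone: "g \<one>\<^bsub>UU\<^esub> = \<one>\<^bsub>A\<^esub>" and gq: "g qU = qA"
    using g unfolding inv_hom_def by blast+
  have gc: "\<And>X. X \<in> inv_carrier UU qU \<Longrightarrow> g X \<in> carrier A"
    using ginv by (simp add: inv_carrier_def)
  have gzero: "g \<zero>\<^bsub>UU\<^esub> = \<zero>\<^bsub>A\<^esub>"
  proof -
    have z: "\<zero>\<^bsub>UU\<^esub> \<in> inv_carrier UU qU" by (rule U.invc_zero)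
    have "g \<zero>\<^bsub>UU\<^esub> = g \<zero>\<^bsub>UU\<^esub> \<oplus>\<^bsub>A\<^esub> g \<zero>\<^bsub>UU\<^esub>" using gadd[OF z z] by simp
    then have "g \<zero>\<^bsub>UU\<^esub> \<ominus>\<^bsub>A\<^esub> g \<zero>\<^bsub>UU\<^esub> = (g \<zero>\<^bsub>UU\<^esub> \<oplus>\<^bsub>A\<^esub> g \<zero>\<^bsub>UU\<^esub>) \<ominus>\<^bsub>A\<^esub> g \<zero>\<^bsub>UU\<^esub>" by simp
    then show ?thesis using gc[OF z] by (simp add: a_minus_def ph.a_assoc ph.r_neg)
  qed
  interpret p: ring_hom_ring TT UU P by (rule P_hom)
  have wd: "P (delta w) \<in> inv_carrier UU qU \<and> g (P (delta w)) = wordA A gA w" for w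
  proof (induction w)
    case Nil
    have "delta [] = \<one>\<^bsub>TT\<^esub>" by (simp add: tens_one delta_def)
    then have "P (delta []) = \<one>\<^bsub>UU\<^esub>" by simp
    then show ?case by (simp add: U.invc_one gone ph.word_Nil)
  next
    case (Cons a w)
    have l: "P (delta [a]) \<in> inv_carrier UU qU \<and> g (P (delta [a])) = gA a"
    proof (cases a)
      case None
      then have "P (delta [a]) = qU" by (simp add: qU_P letter_delta)
      then show ?thesis using None U.invc_q gq by (simp add: gA_def)
    next
      case (Some j)
      then have "P (delta [a]) = iU (b j)" by (simp add: iU_P cf_basis)
      then show ?thesis using Some iU_inv gf by (simp add: gA_def)
    qed
    have "delta (a # w) = delta [a] \<otimes>\<^bsub>TT\<^esub> delta w" by (simp add: delta_mult)
    then have "P (delta (a # w)) = P (delta [a]) \<otimes>\<^bsub>UU\<^esub> P (delta w)"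
      using p.hom_mult[OF delta_carrier delta_carrier] by simp
    then show ?case using l Cons gmult U.invc_mult by (simp add: ph.word_Cons)
  qed
  have gsum: "finite S \<Longrightarrow> g (finsum UU (\<lambda>w. smU (c w) (P (delta w))) S) = finsum A (\<lambda>w. smA (c w) (wordA A gA w)) S"
    for S c
  proof (induction S rule: finite_induct)
    case empty then show ?case by (simp add: gzero)
  next
    case (insert x S)
    have i1: "\<And>w. smU (c w) (P (delta w)) \<in> inv_carrier UU qU"
      using wd U.invc_sm[OF UU_kalg] by blast
    have i2: "finsum UU (\<lambda>w. smU (c w) (P (delta w))) S \<in> inv_carrier UU qU"
      by (rule U.invc_finsum[OF insert(1)]) (rule i1)
    have f1: "(\<lambda>w. smU (c w) (P (delta w))) \<in> S \<rightarrow> carrier UU" using i1 U.invc_carrier by blast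
    have f2: "(\<lambda>w. smA (c w) (wordA A gA w)) \<in> S \<rightarrow> carrier A" by simp
    have "g (finsum UU (\<lambda>w. smU (c w) (P (delta w))) (insert x S))
        = g (smU (c x) (P (delta x)) \<oplus>\<^bsub>UU\<^esub> finsum UU (\<lambda>w. smU (c w) (P (delta w))) S)"
      using insert f1 i1 U.invc_carrier by (simp add: U.finsum_insert)
    also have "\<dots> = smA (c x) (wordA A gA x) \<oplus>\<^bsub>A\<^esub> finsum A (\<lambda>w. smA (c w) (wordA A gA w)) S"
      using gadd[OF i1 i2] gsm wd insert(3) by simp
    also have "\<dots> = finsum A (\<lambda>w. smA (c w) (wordA A gA w)) (insert x S)"
      using insert f2 by (simp add: ph.finsum_insert)
    finally show ?case .
  qed
  obtain F where F: "F \<in> carrier TT" "u = P F" using u by (rule P_surj)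
  have fin: "finite {w. F w \<noteq> 0}" using F(1) by (simp add: tens_carrier)
  have "P F = finsum UU (\<lambda>w. P (tens_sm (F w) (delta w))) {w. F w \<noteq> 0}"
    by (subst tens_expand[OF F(1)], rule p.hom_finsum_nc[OF fin])
       (rule kalg_closed[OF tens_kalg delta_carrier])
  also have "\<dots> = finsum UU (\<lambda>w. smU (F w) (P (delta w))) {w. F w \<noteq> 0}"
    by (simp add: P_sm delta_carrier)
  finally have "g u = finsum A (\<lambda>w. smA (F w) (wordA A gA w)) {w. F w \<noteq> 0}"
    using gsum[OF fin] F(2) by simp
  also have "\<dots> = fp u" using F fp_P by (simp add: phi_def)
  finally show ?thesis .
qed

end



theorem proposition3p1:
  fixes sL :: "'k::field \<Rightarrow> 'L::ab_group_add \<Rightarrow> 'L"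
    and br :: "'L \<Rightarrow> 'L \<Rightarrow> 'L"
    and b :: "'j \<Rightarrow> 'L"
    and k :: 'k
  assumes lie: "lie_algebra sL br"
    and inj_b: "inj b"
    and indep: "module.independent sL (range b)"
    and spans: "module.span sL (range b) = UNIV"
    and k_nz: "k \<noteq> 0"
  shows "inv_algebra (env_U sL br b k) (env_sm sL br b k) (env_q sL br b k)
    \<and> lie_hom6 sL br k (env_U sL br b k) (env_sm sL br b k) (env_q sL br b k) (env_i sL br b k)
    \<and> (\<forall>(A :: 'b ring) (smA :: 'k \<Rightarrow> 'b \<Rightarrow> 'b) qA f.
          inv_algebra A smA qA \<and> lie_hom6 sL br k A smA qA f \<longrightarrow>
          (\<exists>f'. inv_hom (env_U sL br b k) (env_sm sL br b k) (env_q sL br b k) A smA qA f'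
                \<and> (\<forall>x. f x = f' (env_i sL br b k x))
                \<and> (\<forall>g. inv_hom (env_U sL br b k) (env_sm sL br b k) (env_q sL br b k) A smA qA g
                        \<and> (\<forall>x. f x = g (env_i sL br b k x))
                        \<longrightarrow> (\<forall>u\<in>inv_carrier (env_U sL br b k) (env_q sL br b k). g u = f' u))))"
proof -
  interpret setting sL br b k using lie inj_b indep spans by unfold_locales
  have 3: "\<forall>(A :: 'b ring) (smA :: 'k \<Rightarrow> 'b \<Rightarrow> 'b) qA f.
          inv_algebra A smA qA \<and> lie_hom6 sL br k A smA qA f \<longrightarrow>
          (\<exists>f'. inv_hom (env_U sL br b k) (env_sm sL br b k) (env_q sL br b k) A smA qA f'
                \<and> (\<forall>x. f x = f' (env_i sL br b k x))
                \<and> (\<forall>g. inv_hom (env_U sL br b k) (env_sm sL br b k) (env_q sL br b k) A smA qA g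
                        \<and> (\<forall>x. f x = g (env_i sL br b k x))
                        \<longrightarrow> (\<forall>u\<in>inv_carrier (env_U sL br b k) (env_q sL br b k). g u = f' u)))"
  proof (intro allI impI)
    fix A :: "'b ring" and smA :: "'k \<Rightarrow> 'b \<Rightarrow> 'b" and qA f
    assume H: "inv_algebra A smA qA \<and> lie_hom6 sL br k A smA qA f"
    interpret u: univ sL br b k A smA qA f using H by unfold_locales auto
    show "\<exists>f'. inv_hom (env_U sL br b k) (env_sm sL br b k) (env_q sL br b k) A smA qA f'
                \<and> (\<forall>x. f x = f' (env_i sL br b k x))
                \<and> (\<forall>g. inv_hom (env_U sL br b k) (env_sm sL br b k) (env_q sL br b k) A smA qA g
                        \<and> (\<forall>x. f x = g (env_i sL br b k x))
                        \<longrightarrow> (\<forall>u\<in>inv_carrier (env_U sL br b k) (env_q sL br b k). g u = f' u))"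
    proof (intro exI conjI allI impI ballI)
      show "inv_hom (env_U sL br b k) (env_sm sL br b k) (env_q sL br b k) A smA qA u.fp"
        by (rule u.fp_inv_hom)
      show "f x = u.fp (env_i sL br b k x)" for x by (rule u.fp_iU)
      fix g v
      assume g: "inv_hom (env_U sL br b k) (env_sm sL br b k) (env_q sL br b k) A smA qA g
                        \<and> (\<forall>x. f x = g (env_i sL br b k x))"
        and v: "v \<in> inv_carrier (env_U sL br b k) (env_q sL br b k)"
      show "g v = u.fp v"
        using u.uniq[of g v] g v by (simp add: inv_carrier_def)
    qed
  qed
  show ?thesis using UU_inv_algebra iU_lie_hom 3 by blast
qed



end
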